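(* Suppose $u\in H^{3,3}(\mathbb{R})$ and $k\in\{k\in\mathbb{R}\cup i\mathbb{R}:|k|>1\}$. Then the resolvent $(I-T)^{-1}$ exists as a bounded operator on $C^0(\mathbb{R}^+)$, and $L\equiv(I-T)^{-1}-I$ is an integral operator with integral kernel $L(x,y,k)$ such that $L(x,y,k)=0$ for $x>y$, $L$ is continuous in $(x,y,k)$ for $x<y$, and $$|L(x,y,k)|\le \exp\big(\|u\|_{W^{1,1}}\|\widetilde u\|_{L^1}\big)\,\|u\|_{W^{1,1}}\,|\widetilde u(y)| .$$
   Context: $H^{3,3}(\mathbb{R})=H^3\cap L^{2,3}$. $\widetilde u(x)=\bar u_{xx}(x)+\frac{i}{2}|u_x(x)|^2\bar u_x(x)$, and $T$ is the operator $$(Tf)(x,k)=\frac{i}{2}\int_x^\infty \bar u(y)\int_y^\infty e^{2ik^2(y-z)}\widetilde u(z)f(z,k)\,dz\,dy .$$ *)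

theory Defs
  imports "HOL-Analysis.Analysis"
begin

definition d1 :: "(real \<Rightarrow> complex) \<Rightarrow> real \<Rightarrow> complex" where
  "d1 u = (\<lambda>x. vector_derivative u (at x))"

definition d2 :: "(real \<Rightarrow> complex) \<Rightarrow> real \<Rightarrow> complex" where
  "d2 u = d1 (d1 u)"

definition sq_int :: "(real \<Rightarrow> complex) \<Rightarrow> bool" where
  "sq_int f \<longleftrightarrow> f \<in> borel_measurable lborel \<and> integrable lborel (\<lambda>x. (cmod (f x))^2)"

text \<open>H^{3,3}(R) = H^3 \<inter> L^{2,3}, using the C^2 representative of an H^3 function:
  u, u', u'' classical derivatives, u'' absolutely continuous with derivative u''' in L^2,
  u, u', u'', u''' in L^2, and (1+x^2)^{3/2} u in L^2.\<close>
definition H33 :: "(real \<Rightarrow> complex) \<Rightarrow> bool" where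
  "H33 u \<longleftrightarrow>
     (\<forall>x. (u has_vector_derivative d1 u x) (at x)) \<and>
     (\<forall>x. (d1 u has_vector_derivative d2 u x) (at x)) \<and>
     (\<exists>u3. sq_int u3 \<and>
        (\<forall>a b. a \<le> b \<longrightarrow> set_integrable lborel {a..b} u3 \<and>
                d2 u b - d2 u a = set_lebesgue_integral lborel {a..b} u3)) \<and>
     sq_int u \<and> sq_int (d1 u) \<and> sq_int (d2 u) \<and>
     sq_int (\<lambda>x. complex_of_real ((1 + x^2) powr (3/2)) * u x)"

definition utilde :: "(real \<Rightarrow> complex) \<Rightarrow> real \<Rightarrow> complex" where
  "utilde u x = cnj (d2 u x) + (\<i>/2) * complex_of_real ((cmod (d1 u x))^2) * cnj (d1 u x)"

definition L1norm :: "(real \<Rightarrow> complex) \<Rightarrow> real" where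
  "L1norm f = (\<integral>x. cmod (f x) \<partial>lborel)"

definition W11norm :: "(real \<Rightarrow> complex) \<Rightarrow> real" where
  "W11norm u = L1norm u + L1norm (d1 u)"

definition Top :: "(real \<Rightarrow> complex) \<Rightarrow> complex \<Rightarrow> (real \<Rightarrow> complex) \<Rightarrow> real \<Rightarrow> complex" where
  "Top u k f x = (\<i>/2) * set_lebesgue_integral lborel {x..}
      (\<lambda>y. cnj (u y) * set_lebesgue_integral lborel {y..}
            (\<lambda>z. exp (2 * \<i> * k^2 * complex_of_real (y - z)) * utilde u z * f z))"

definition C0p :: "(real \<Rightarrow> complex) \<Rightarrow> bool" where
  "C0p f \<longleftrightarrow> continuous_on {0..} f \<and> bounded (f ` {0..})"

definition supn :: "(real \<Rightarrow> complex) \<Rightarrow> real" where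
  "supn f = (SUP x\<in>{0..}. cmod (f x))"

definition Kdom :: "complex set" where
  "Kdom = {k. (Im k = 0 \<or> Re k = 0) \<and> cmod k > 1}"

end

theory Submission
  imports Defs "HOL-Probability.Sinc_Integral"
begin

lemma param_cont:
  fixes F :: "'p::metric_space \<Rightarrow> real \<Rightarrow> 'b::{banach,second_countable_topology}"
  assumes meas: "\<And>p. p \<in> P \<Longrightarrow> F p \<in> borel_measurable lborel"
    and bound: "\<And>p s. p \<in> P \<Longrightarrow> norm (F p s) \<le> g s"
    and intg: "integrable lborel g"
    and cont: "\<And>p. p \<in> P \<Longrightarrow> AE s in lborel. continuous (at p within P) (\<lambda>q. F q s)"
  shows "continuous_on P (\<lambda>p. integral\<^sup>L lborel (F p))"
proof (rule continuous_on_sequentiallyI)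
  fix q :: "nat \<Rightarrow> 'p" and p assume qP: "\<forall>n. q n \<in> P" and pP: "p \<in> P" and lim: "q \<longlonglongrightarrow> p"
  show "(\<lambda>n. integral\<^sup>L lborel (F (q n))) \<longlonglongrightarrow> integral\<^sup>L lborel (F p)"
  proof (rule integral_dominated_convergence[where w=g])
    show "F p \<in> borel_measurable lborel" using meas pP by auto
    show "\<And>i. F (q i) \<in> borel_measurable lborel" using meas qP by auto
    show "integrable lborel g" by fact
    show "AE x in lborel. (\<lambda>i. F (q i) x) \<longlonglongrightarrow> F p x"
      using cont[OF pP] by eventually_elim (rule continuous_within_tendsto_compose'[OF _ _ lim], auto simp: qP)
    show "\<And>i. AE x in lborel. norm (F (q i) x) \<le> g x" using bound qP by auto
  qed
qed

lemma indicator_cont_at: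
  fixes a b :: "'p::metric_space \<Rightarrow> real"
  assumes "continuous (at p within P) a" "continuous (at p within P) b" "s \<noteq> a p" "s \<noteq> b p"
  shows "continuous (at p within P) (\<lambda>q. indicator {a q..b q} s :: real)"
proof -
  have ev: "eventually (\<lambda>q. indicator {a q..b q} s = (indicator {a p..b p} s :: real)) (at p within P)"
  proof (cases "s < a p")
    case True
    then have "eventually (\<lambda>q. s < a q) (at p within P)"
      using assms(1) unfolding continuous_within by (intro order_tendstoD) auto
    then show ?thesis by eventually_elim (use True in auto)
  next
    case False
    then have sa: "a p < s" using assms by auto
    show ?thesis
    proof (cases "s < b p")
      case True
      have "eventually (\<lambda>q. a q < s) (at p within P)"
        using assms(1) sa unfolding continuous_within by (intro order_tendstoD) auto
      moreover have "eventually (\<lambda>q. s < b q) (at p within P)"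
        using assms(2) True unfolding continuous_within by (intro order_tendstoD) auto
      ultimately show ?thesis by eventually_elim (use True sa in auto)
    next
      case False
      then have "b p < s" using assms by auto
      then have "eventually (\<lambda>q. b q < s) (at p within P)"
        using assms(2) unfolding continuous_within by (intro order_tendstoD) auto
      then show ?thesis by eventually_elim (use \<open>b p < s\<close> in auto)
    qed
  qed
  show ?thesis unfolding continuous_within
    by (rule Lim_transform_eventually[OF tendsto_const]) (use ev in \<open>auto elim: eventually_mono\<close>)
qed

lemma param_cont_Icc:
  fixes G :: "'p::metric_space \<Rightarrow> real \<Rightarrow> 'b::{banach,second_countable_topology}"
  assumes ca: "continuous_on P a" and cb: "continuous_on P b"
    and cG: "\<And>s. continuous_on P (\<lambda>p. G p s)"
    and meas: "\<And>p. p \<in> P \<Longrightarrow> G p \<in> borel_measurable lborel"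
    and bound: "\<And>p s. p \<in> P \<Longrightarrow> norm (G p s) \<le> g s"
    and intg: "integrable lborel g"
  shows "continuous_on P (\<lambda>p. set_lebesgue_integral lborel {a p..b p} (G p))"
  unfolding set_lebesgue_integral_def
proof (rule param_cont[where g=g])
  show "\<And>p. p \<in> P \<Longrightarrow> (\<lambda>s. indicator {a p..b p} s *\<^sub>R G p s) \<in> borel_measurable lborel"
    using meas by measurable
  show "norm (indicator {a p..b p} s *\<^sub>R G p s) \<le> g s" if "p \<in> P" for p s
  proof -
    have "0 \<le> g s" using bound[OF that, of s] norm_ge_zero[of "G p s"] by linarith
    then show ?thesis using bound[OF that, of s] by (auto simp: indicator_def)
  qed
  show "integrable lborel g" by fact
  fix p assume pP: "p \<in> P"
  have "AE s in lborel. s \<noteq> a p" by (rule AE_lborel_singleton)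
  moreover have "AE s in lborel. s \<noteq> b p" by (rule AE_lborel_singleton)
  ultimately show "AE s in lborel. continuous (at p within P) (\<lambda>q. indicator {a q..b q} s *\<^sub>R G q s)"
  proof eventually_elim
    case (elim s)
    have "continuous (at p within P) (\<lambda>q. indicator {a q..b q} s :: real)"
      by (rule indicator_cont_at) (use elim ca cb pP in \<open>auto simp: continuous_on_eq_continuous_within\<close>)
    moreover have "continuous (at p within P) (\<lambda>q. G q s)"
      using cG[of s] pP by (auto simp: continuous_on_eq_continuous_within)
    ultimately show ?case by (intro continuous_intros)
  qed
qed

lemma cont_meas: "continuous_on UNIV (f::real \<Rightarrow> 'a::{banach,second_countable_topology}) \<Longrightarrow> f \<in> borel_measurable lborel"
  by (simp add: borel_measurable_continuous_onI)

lemma cont_meas2: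
  fixes f :: "real \<Rightarrow> real \<Rightarrow> 'a::{banach,second_countable_topology}"
  assumes "continuous_on UNIV (\<lambda>(x,y). f x y)"
  shows "(\<lambda>(x,y). f x y) \<in> borel_measurable (lborel \<Otimes>\<^sub>M lborel)"
proof -
  have "(\<lambda>(x,y). f x y) \<in> borel_measurable borel"
    using assms by (rule borel_measurable_continuous_onI)
  then show ?thesis
    by (simp add: lborel_prod measurable_lborel1)
qed

locale vol =
  fixes u ut :: "real \<Rightarrow> complex" and B :: real
  assumes cu: "continuous_on UNIV u" and cut: "continuous_on UNIV ut"
    and iu: "integrable lborel u" and iut: "integrable lborel ut"
    and bd: "\<And>z. cmod (ut z) \<le> B"
begin

lemma mu[measurable]: "u \<in> borel_measurable lborel" using cu by (rule cont_meas)
lemma mut[measurable]: "ut \<in> borel_measurable lborel" using cut by (rule cont_meas)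

definition E :: "complex \<Rightarrow> real \<Rightarrow> complex" where
  "E k t = exp (2 * \<i> * k^2 * complex_of_real t)"

definition K1 :: "complex \<Rightarrow> real \<Rightarrow> real \<Rightarrow> complex" where
  "K1 k x z = (\<i>/2) * ut z * set_lebesgue_integral lborel {x..z} (\<lambda>y. cnj (u y) * E k (y - z))"

fun Kit :: "nat \<Rightarrow> complex \<Rightarrow> real \<Rightarrow> real \<Rightarrow> complex" where
  "Kit 0 k x z = K1 k x z"
| "Kit (Suc n) k x z = set_lebesgue_integral lborel {x..z} (\<lambda>s. K1 k x s * Kit n k s z)"

definition cc :: real where "cc = (\<integral>y. cmod (u y) \<partial>lborel) / 2"
definition NN :: real where "NN = (\<integral>y. cmod (ut y) \<partial>lborel)"

lemma cc_nonneg: "0 \<le> cc" unfolding cc_def by (simp add: integral_nonneg_AE)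
lemma NN_nonneg: "0 \<le> NN" unfolding NN_def by (simp add: integral_nonneg_AE)

lemma normE: "k \<in> Kdom \<Longrightarrow> cmod (E k t) = 1"
proof -
  assume "k \<in> Kdom"
  then have "Re k = 0 \<or> Im k = 0" by (auto simp: Kdom_def)
  then have "Im (k^2) = 0" by (auto simp: power2_eq_square)
  then show ?thesis unfolding E_def by (simp add: power2_eq_square)
qed

lemma contE: "continuous_on UNIV (\<lambda>(k,t). E k t)"
  unfolding E_def case_prod_beta by (intro continuous_intros)

lemma measE[measurable]: "E k \<in> borel_measurable borel"
  unfolding E_def by measurable

lemma mu'[measurable]: "u \<in> borel_measurable borel" using cu by (rule borel_measurable_continuous_onI)
lemma mut'[measurable]: "ut \<in> borel_measurable borel" using cut by (rule borel_measurable_continuous_onI)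
lemma mcu[measurable]: "(\<lambda>x. cnj (u x)) \<in> borel_measurable borel"
  by (rule borel_measurable_continuous_onI) (intro continuous_intros cu)

end

context vol
begin

abbreviation "PP \<equiv> (UNIV :: real set) \<times> (UNIV :: real set) \<times> Kdom"

lemma int_cmod_u: "integrable lborel (\<lambda>y. cmod (u y))" using iu by simp
lemma int_cmod_ut: "integrable lborel (\<lambda>y. cmod (ut y))" using iut by simp

lemma set_int_bound_gen:
  fixes g :: "real \<Rightarrow> complex"
  assumes [measurable]: "g \<in> borel_measurable lborel" and h: "integrable lborel h"
    and b: "\<And>y. cmod (g y) \<le> h y" and [measurable]: "A \<in> sets lborel"
  shows "cmod (set_lebesgue_integral lborel A g) \<le> (\<integral>y. h y \<partial>lborel)"
    and "set_integrable lborel A g"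
proof -
  have i1: "integrable lborel (\<lambda>y. indicator A y *\<^sub>R g y)"
    by (rule Bochner_Integration.integrable_bound[OF h]) (use b in \<open>auto simp: indicator_def intro!: AE_I2 intro: order_trans[OF _ abs_ge_self]\<close>)
  then show "set_integrable lborel A g" by (simp add: set_integrable_def)
  have "cmod (set_lebesgue_integral lborel A g) \<le> (\<integral>y. norm (indicator A y *\<^sub>R g y) \<partial>lborel)"
    unfolding set_lebesgue_integral_def by (rule integral_norm_bound)
  also have "\<dots> \<le> (\<integral>y. h y \<partial>lborel)"
  proof (rule integral_mono)
    show "integrable lborel (\<lambda>y. norm (indicator A y *\<^sub>R g y))" using i1 by (rule integrable_norm)
    show "integrable lborel h" by fact
    show "norm (indicator A y *\<^sub>R g y) \<le> h y" for y
    proof -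
      have "0 \<le> h y" using b[of y] norm_ge_zero[of "g y"] by linarith
      then show ?thesis using b[of y] by (auto simp: indicator_def)
    qed
  qed
  finally show "cmod (set_lebesgue_integral lborel A g) \<le> (\<integral>y. h y \<partial>lborel)" .
qed

lemma K1_bound: "k \<in> Kdom \<Longrightarrow> cmod (K1 k x z) \<le> cc * cmod (ut z)"
proof -
  assume k: "k \<in> Kdom"
  have "cmod (set_lebesgue_integral lborel {x..z} (\<lambda>y. cnj (u y) * E k (y - z))) \<le> (\<integral>y. cmod (u y) \<partial>lborel)"
    by (rule set_int_bound_gen(1)[OF _ int_cmod_u]) (auto simp: norm_mult normE[OF k])
  then show ?thesis
    unfolding K1_def cc_def by (simp add: norm_mult mult_left_mono[OF _ norm_ge_zero] mult.commute)
qed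

lemma K1_zero: "z < x \<Longrightarrow> K1 k x z = 0"
  unfolding K1_def by (simp add: set_lebesgue_integral_def)

lemma cont_K1_int: "continuous_on PP (\<lambda>p. set_lebesgue_integral lborel {fst p..fst (snd p)}
      (\<lambda>y. cnj (u y) * E (snd (snd p)) (y - fst (snd p))))"
proof (rule param_cont_Icc[where g="\<lambda>y. cmod (u y)"])
  show "continuous_on PP fst" "continuous_on PP (\<lambda>p. fst (snd p))" by (intro continuous_intros)+
  show "continuous_on PP (\<lambda>p. cnj (u s) * E (snd (snd p)) (s - fst (snd p)))" for s
    unfolding E_def by (intro continuous_intros)
  show "(\<lambda>y. cnj (u y) * E (snd (snd p)) (y - fst (snd p))) \<in> borel_measurable lborel" for p
    by measurable
  show "cmod (cnj (u s) * E (snd (snd p)) (s - fst (snd p))) \<le> cmod (u s)" if "p \<in> PP" for p s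
    using that by (auto simp: norm_mult normE)
  show "integrable lborel (\<lambda>y. cmod (u y))" by (rule int_cmod_u)
qed

lemma cont_K1: "continuous_on PP (\<lambda>(x,z,k). K1 k x z)"
proof -
  have "continuous_on PP (\<lambda>p. (\<i>/2) * ut (fst (snd p)) * set_lebesgue_integral lborel {fst p..fst (snd p)}
      (\<lambda>y. cnj (u y) * E (snd (snd p)) (y - fst (snd p))))"
    by (intro continuous_intros cont_K1_int continuous_on_compose2[OF cut]) auto
  then show ?thesis by (simp add: K1_def case_prod_beta)
qed

end

context vol
begin

definition Wt :: "real \<Rightarrow> real \<Rightarrow> real" where
  "Wt x z = integral {x..z} (\<lambda>s. cmod (ut s))"

lemma cont_cmod_ut: "continuous_on S (\<lambda>s. cmod (ut s))"
  by (intro continuous_intros continuous_on_subset[OF cut]) auto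

lemma Wt_nonneg: "0 \<le> Wt x z"
  unfolding Wt_def by (rule integral_nonneg) (auto intro: integrable_continuous_real cont_cmod_ut)

lemma Wt_set: "Wt x z = set_lebesgue_integral lborel {x..z} (\<lambda>s. cmod (ut s))"
  unfolding Wt_def
  by (rule set_borel_integral_eq_integral(2)[symmetric], rule borel_integrable_atLeastAtMost', rule cont_cmod_ut)

lemma Wt_le_NN: "Wt x z \<le> NN"
proof -
  have "Wt x z = (\<integral>s. indicator {x..z} s * cmod (ut s) \<partial>lborel)"
    unfolding Wt_set set_lebesgue_integral_def by simp
  also have "\<dots> \<le> (\<integral>s. cmod (ut s) \<partial>lborel)"
  proof (rule integral_mono)
    show "integrable lborel (\<lambda>s. indicator {x..z} s * cmod (ut s))"
      using borel_integrable_atLeastAtMost'[OF cont_cmod_ut, of x z]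
      by (simp add: set_integrable_def)
  qed (use int_cmod_ut in \<open>auto simp: indicator_def\<close>)
  finally show ?thesis unfolding NN_def .
qed

lemma ftc_pow:
  assumes xz: "x \<le> z"
  shows "((\<lambda>s. cmod (ut s) * Wt s z ^ n) has_integral (Wt x z ^ Suc n / Suc n)) {x..z}"
proof -
  define g where "g s = cmod (ut s)" for s
  define V where "V s = integral {x..s} g" for s
  have cg: "continuous_on {x..z} g" unfolding g_def by (rule cont_cmod_ut)
  have WV: "Wt s z = V z - V s" if "s \<in> {x..z}" for s
  proof -
    have "integral {x..s} g + integral {s..z} g = integral {x..z} g"
      by (rule Henstock_Kurzweil_Integration.integral_combine) (use that cg in \<open>auto intro: integrable_continuous_real\<close>)
    then show ?thesis unfolding Wt_def V_def g_def by simp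
  qed
  have dV: "(V has_real_derivative g s) (at s within {x..z})" if "s \<in> {x..z}" for s
    using integral_has_vector_derivative[OF cg that] unfolding V_def
    by (simp add: has_real_derivative_iff_has_vector_derivative)
  define \<Phi> where "\<Phi> s = - ((V z - V s) ^ Suc n / Suc n)" for s
  have d\<Phi>: "(\<Phi> has_vector_derivative (g s * (V z - V s) ^ n)) (at s within {x..z})" if "s \<in> {x..z}" for s
  proof -
    have "(\<Phi> has_real_derivative (- (real (Suc n) * (V z - V s) ^ n * (0 - g s) / Suc n))) (at s within {x..z})"
      unfolding \<Phi>_def using dV[OF that] by (intro derivative_eq_intros) auto
    moreover have "- (real (Suc n) * (V z - V s) ^ n * (0 - g s) / Suc n) = g s * (V z - V s) ^ n"
      by (simp add: field_simps)
    ultimately show ?thesis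
      by (simp add: has_real_derivative_iff_has_vector_derivative[symmetric] mult.commute del: of_nat_Suc)
  qed
  have "((\<lambda>s. g s * (V z - V s) ^ n) has_integral (\<Phi> z - \<Phi> x)) {x..z}"
    by (rule fundamental_theorem_of_calculus[OF xz d\<Phi>])
  moreover have "\<Phi> z - \<Phi> x = Wt x z ^ Suc n / Suc n"
    using WV[of x] xz unfolding \<Phi>_def V_def by simp
  ultimately show ?thesis
    by (subst has_integral_cong[where g="\<lambda>s. g s * (V z - V s) ^ n"]) (auto simp: WV g_def)
qed

end

lemma cont_PP_comp:
  fixes F :: "real \<Rightarrow> real \<Rightarrow> complex \<Rightarrow> 'b::topological_space"
  assumes F: "continuous_on (UNIV \<times> UNIV \<times> Kdom) (\<lambda>(x,z,k). F x z k)"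
    and a: "continuous_on S a" and b: "continuous_on S b" and c: "continuous_on S c"
    and cK: "\<And>p. p \<in> S \<Longrightarrow> c p \<in> Kdom"
  shows "continuous_on S (\<lambda>p. F (a p) (b p) (c p))"
proof -
  have "continuous_on S (\<lambda>p. (\<lambda>(x,z,k). F x z k) (a p, b p, c p))"
    by (rule continuous_on_compose2[OF F]) (use a b c cK in \<open>auto intro!: continuous_intros\<close>)
  then show ?thesis by simp
qed

context vol
begin

lemma cont_Wt: "continuous_on UNIV (\<lambda>p. Wt (fst p) (snd p))"
  unfolding Wt_set
  by (rule param_cont_Icc[where g="\<lambda>s. cmod (ut s)"]) (auto intro!: continuous_intros int_cmod_ut)

lemma cont_Wt1: "continuous_on UNIV (\<lambda>s. Wt s z)"
proof -
  have "continuous_on UNIV (\<lambda>s. (s, z))" by (intro continuous_intros)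
  from continuous_on_compose2[OF cont_Wt this] show ?thesis by simp
qed

lemma Kit_zero: "z < x \<Longrightarrow> Kit n k x z = 0"
  by (cases n) (auto simp: K1_zero set_lebesgue_integral_def)

lemma Kit_props:
  "(\<forall>k\<in>Kdom. \<forall>x z. cmod (Kit n k x z) \<le> cc * cmod (ut z) * (cc * Wt x z) ^ n / fact n)
   \<and> continuous_on PP (\<lambda>(x,z,k). Kit n k x z)"
proof (induction n)
  case 0
  show ?case using K1_bound cont_K1 by simp
next
  case (Suc n)
  have IB: "cmod (Kit n k x z) \<le> cc * cmod (ut z) * (cc * Wt x z) ^ n / fact n" if "k \<in> Kdom" for k x z
    using Suc.IH that by blast
  have IC: "continuous_on PP (\<lambda>(x,z,k). Kit n k x z)" using Suc.IH by blast
  define Cn where "Cn = cc * B * (cc * NN) ^ n / fact n"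
  have B0: "0 \<le> B" using bd[of 0] norm_ge_zero[of "ut 0"] by linarith
  have IB2: "cmod (Kit n k x z) \<le> Cn" if "k \<in> Kdom" for k x z
  proof -
    have "cc * cmod (ut z) * (cc * Wt x z) ^ n / fact n \<le> cc * B * (cc * NN) ^ n / fact n"
      by (intro divide_right_mono mult_mono mult_left_mono power_mono bd Wt_le_NN)
         (auto simp: cc_nonneg Wt_nonneg B0 NN_nonneg)
    then show ?thesis using IB[OF that, of x z] unfolding Cn_def by linarith
  qed
  have cK1s: "continuous_on UNIV (\<lambda>s. K1 k x s)" if "k \<in> Kdom" for k x
    using cont_PP_comp[OF cont_K1, of UNIV "\<lambda>s. x" "\<lambda>s. s" "\<lambda>s. k"] that by (auto intro!: continuous_intros)
  have cKns: "continuous_on UNIV (\<lambda>s. Kit n k s z)" if "k \<in> Kdom" for k z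
    using cont_PP_comp[OF IC, of UNIV "\<lambda>s. s" "\<lambda>s. z" "\<lambda>s. k"] that by (auto intro!: continuous_intros)
  have bound: "\<forall>k\<in>Kdom. \<forall>x z. cmod (Kit (Suc n) k x z) \<le> cc * cmod (ut z) * (cc * Wt x z) ^ Suc n / fact (Suc n)"
  proof (intro ballI allI)
    fix k x z assume k: "k \<in> Kdom"
    show "cmod (Kit (Suc n) k x z) \<le> cc * cmod (ut z) * (cc * Wt x z) ^ Suc n / fact (Suc n)"
    proof (cases "x \<le> z")
      case False
      then show ?thesis by (simp add: set_lebesgue_integral_def cc_nonneg Wt_nonneg)
    next
      case xz: True
      define h where "h s = cc * cmod (ut s) * (cc * cmod (ut z) * (cc * Wt s z) ^ n / fact n)" for s
      have ch: "continuous_on UNIV h" unfolding h_def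
        by (intro continuous_intros cont_Wt1 continuous_on_compose2[OF cut]) auto
      have mK[measurable]: "(\<lambda>s. K1 k x s * Kit n k s z) \<in> borel_measurable lborel"
        by (intro cont_meas continuous_intros cK1s cKns k)
      have si: "set_integrable lborel {x..z} (\<lambda>s. K1 k x s * Kit n k s z)"
        by (rule borel_integrable_atLeastAtMost') (intro continuous_intros continuous_on_subset[OF cK1s[OF k]] continuous_on_subset[OF cKns[OF k]], auto)
      have sh: "set_integrable lborel {x..z} h"
        by (rule borel_integrable_atLeastAtMost') (rule continuous_on_subset[OF ch], auto)
      have "cmod (Kit (Suc n) k x z) \<le> set_lebesgue_integral lborel {x..z} (\<lambda>s. cmod (K1 k x s * Kit n k s z))"
        using set_integral_norm_bound[OF si] by simp
      also have "\<dots> \<le> set_lebesgue_integral lborel {x..z} h"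
      proof (rule set_integral_mono)
        show "set_integrable lborel {x..z} (\<lambda>s. cmod (K1 k x s * Kit n k s z))"
          using si by (rule set_integrable_norm)
        show "set_integrable lborel {x..z} h" by fact
        show "cmod (K1 k x s * Kit n k s z) \<le> h s" if "s \<in> {x..z}" for s
          unfolding h_def norm_mult
          by (intro mult_mono K1_bound[OF k] IB[OF k]) (auto simp: cc_nonneg Wt_nonneg)
      qed
      also have "\<dots> = integral {x..z} h"
        by (rule set_borel_integral_eq_integral(2)[OF sh])
      also have "\<dots> = cc * cc * cmod (ut z) * cc ^ n / fact n * integral {x..z} (\<lambda>s. cmod (ut s) * Wt s z ^ n)"
        unfolding h_def by (simp add: power_mult_distrib field_simps flip: integral_mult_right)
      also have "\<dots> = cc * cc * cmod (ut z) * cc ^ n / fact n * (Wt x z ^ Suc n / Suc n)"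
        using ftc_pow[OF xz, of n] by (simp add: integral_unique)
      also have "\<dots> = cc * cmod (ut z) * (cc * Wt x z) ^ Suc n / fact (Suc n)"
        by (simp add: power_mult_distrib field_simps)
      finally show ?thesis .
    qed
  qed
  have cont: "continuous_on PP (\<lambda>(x,z,k). Kit (Suc n) k x z)"
  proof -
    have "continuous_on PP (\<lambda>p. set_lebesgue_integral lborel {fst p..fst (snd p)}
        (\<lambda>s. K1 (snd (snd p)) (fst p) s * Kit n (snd (snd p)) s (fst (snd p))))"
    proof (rule param_cont_Icc[where g="\<lambda>s. cc * cmod (ut s) * Cn"])
      show "continuous_on PP fst" "continuous_on PP (\<lambda>p. fst (snd p))" by (intro continuous_intros)+
      show "continuous_on PP (\<lambda>p. K1 (snd (snd p)) (fst p) s * Kit n (snd (snd p)) s (fst (snd p)))" for s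
        by (intro continuous_intros cont_PP_comp[OF cont_K1] cont_PP_comp[OF IC]) auto
      show "(\<lambda>s. K1 (snd (snd p)) (fst p) s * Kit n (snd (snd p)) s (fst (snd p))) \<in> borel_measurable lborel"
        if "p \<in> PP" for p
        using that by (intro cont_meas continuous_intros cK1s cKns) auto
      show "cmod (K1 (snd (snd p)) (fst p) s * Kit n (snd (snd p)) s (fst (snd p))) \<le> cc * cmod (ut s) * Cn"
        if "p \<in> PP" for p s
        unfolding norm_mult using that
        by (intro mult_mono K1_bound IB2) (auto simp: cc_nonneg)
      show "integrable lborel (\<lambda>s. cc * cmod (ut s) * Cn)"
        using int_cmod_ut by simp
    qed
    then show ?thesis by (simp add: case_prod_beta)
  qed
  show ?case using bound cont by blast
qed

end

context vol
begin

definition Lk :: "real \<Rightarrow> real \<Rightarrow> complex \<Rightarrow> complex" where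
  "Lk x z k = (\<Sum>n. Kit n k x z)"

lemma Kit_bound: "k \<in> Kdom \<Longrightarrow> cmod (Kit n k x z) \<le> cc * cmod (ut z) * (cc * Wt x z) ^ n / fact n"
  using Kit_props[of n] by blast

lemma cont_Kit: "continuous_on PP (\<lambda>(x,z,k). Kit n k x z)"
  using Kit_props[of n] by blast

lemma exp_sums_real: "(\<lambda>n. (a::real) ^ n / fact n) sums exp a"
  using exp_converges[of a] by (simp add: divide_inverse mult.commute)

lemma B0: "0 \<le> B" using bd[of 0] norm_ge_zero[of "ut 0"] by linarith

lemma Kit_bound2: "k \<in> Kdom \<Longrightarrow> cmod (Kit n k x z) \<le> cc * cmod (ut z) * ((cc * NN) ^ n / fact n)"
proof -
  assume k: "k \<in> Kdom"
  have "cc * cmod (ut z) * (cc * Wt x z) ^ n / fact n \<le> cc * cmod (ut z) * (cc * NN) ^ n / fact n"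
    by (intro divide_right_mono mult_left_mono power_mono Wt_le_NN)
       (auto simp: cc_nonneg Wt_nonneg NN_nonneg)
  then show ?thesis using Kit_bound[OF k, of n x z] by simp
qed

lemma Kit_bound3: "k \<in> Kdom \<Longrightarrow> cmod (Kit n k x z) \<le> cc * B * ((cc * NN) ^ n / fact n)"
proof -
  assume k: "k \<in> Kdom"
  have "cc * cmod (ut z) * ((cc * NN) ^ n / fact n) \<le> cc * B * ((cc * NN) ^ n / fact n)"
    by (intro mult_right_mono mult_left_mono bd) (auto simp: cc_nonneg NN_nonneg)
  then show ?thesis using Kit_bound2[OF k, of n x z] by linarith
qed

lemma sm_exp: "summable (\<lambda>n. c * ((a::real) ^ n / fact n))"
  by (rule summable_mult[OF sums_summable[OF exp_sums_real]])

lemma summable_Kit_norm: "k \<in> Kdom \<Longrightarrow> summable (\<lambda>n. cmod (Kit n k x z))"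
proof (rule summable_comparison_test[OF _ sm_exp[of "cc * cmod (ut z)" "cc * NN"]])
  assume "k \<in> Kdom"
  then show "\<exists>N. \<forall>n\<ge>N. norm (cmod (Kit n k x z)) \<le> cc * cmod (ut z) * ((cc * NN) ^ n / fact n)"
    using Kit_bound2 by (intro exI[of _ 0]) simp
qed

lemma summable_Kit: "k \<in> Kdom \<Longrightarrow> summable (\<lambda>n. Kit n k x z)"
  by (rule summable_norm_cancel[OF summable_Kit_norm])

lemma Lk_bound: "k \<in> Kdom \<Longrightarrow> cmod (Lk x z k) \<le> cc * cmod (ut z) * exp (cc * NN)"
proof -
  assume k: "k \<in> Kdom"
  have "cmod (Lk x z k) \<le> (\<Sum>n. cmod (Kit n k x z))"
    unfolding Lk_def by (rule summable_norm[OF summable_Kit_norm[OF k]])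
  also have "\<dots> \<le> (\<Sum>n. cc * cmod (ut z) * ((cc * NN) ^ n / fact n))"
    by (rule suminf_le) (use Kit_bound2[OF k] summable_Kit_norm[OF k]
       summable_mult[OF sums_summable[OF exp_sums_real]] in auto)
  also have "\<dots> = cc * cmod (ut z) * exp (cc * NN)"
    using sums_mult[OF exp_sums_real, of "cc * cmod (ut z)" "cc * NN"] by (simp add: sums_iff)
  finally show ?thesis .
qed

lemma Lk_zero: "z < x \<Longrightarrow> Lk x z k = 0"
  unfolding Lk_def by (simp add: Kit_zero)

lemma cont_Lk: "continuous_on PP (\<lambda>(x,z,k). Lk x z k)"
proof -
  have ul: "uniform_limit PP (\<lambda>N p. \<Sum>n<N. (\<lambda>(x,z,k). Kit n k x z) p) (\<lambda>p. \<Sum>n. (\<lambda>(x,z,k). Kit n k x z) p) sequentially"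
    by (rule Weierstrass_m_test[where M="\<lambda>n. cc * B * ((cc * NN) ^ n / fact n)"])
       (auto intro: Kit_bound3 sm_exp sums_summable[OF exp_sums_real] simp del: times_divide_eq_right)
  have "continuous_on PP (\<lambda>p. \<Sum>n. (\<lambda>(x,z,k). Kit n k x z) p)"
    by (rule uniform_limit_theorem[OF _ ul]) (auto intro!: always_eventually continuous_intros cont_Kit)
  then show ?thesis unfolding Lk_def by (simp add: case_prod_beta)
qed

end

lemma fubini_swap:
  fixes F :: "real \<Rightarrow> real \<Rightarrow> complex"
  assumes m[measurable]: "(\<lambda>(y,z). F y z) \<in> borel_measurable (lborel \<Otimes>\<^sub>M lborel)"
    and b: "\<And>y z. cmod (F y z) \<le> a y * b z"
    and a0: "\<And>y. 0 \<le> a y" and b0: "\<And>z. 0 \<le> b z"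
    and ia: "integrable lborel a" and ib: "integrable lborel b"
  shows "(\<integral>y. (\<integral>z. F y z \<partial>lborel) \<partial>lborel) = (\<integral>z. (\<integral>y. F y z \<partial>lborel) \<partial>lborel)"
proof -
  have ma[measurable]: "a \<in> borel_measurable lborel" using ia by auto
  have mb[measurable]: "b \<in> borel_measurable lborel" using ib by auto
  have int: "integrable (lborel \<Otimes>\<^sub>M lborel) (\<lambda>(y,z). F y z)"
  proof (rule lborel_pair.Fubini_integrable)
    show "(\<lambda>(y,z). F y z) \<in> borel_measurable (lborel \<Otimes>\<^sub>M lborel)" by fact
    have mi: "(\<lambda>y. \<integral>z. norm (case (y, z) of (y, z) \<Rightarrow> F y z) \<partial>lborel) \<in> borel_measurable lborel"
      by measurable
    show "integrable lborel (\<lambda>y. \<integral>z. norm (case (y, z) of (y, z) \<Rightarrow> F y z) \<partial>lborel)"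
    proof (rule Bochner_Integration.integrable_bound[where f="\<lambda>y. a y * (\<integral>z. b z \<partial>lborel)"])
      show "integrable lborel (\<lambda>y. a y * (\<integral>z. b z \<partial>lborel))" using ia by simp
      show "(\<lambda>y. \<integral>z. norm (case (y, z) of (y, z) \<Rightarrow> F y z) \<partial>lborel) \<in> borel_measurable lborel" by (rule mi)
      show "AE y in lborel. norm (\<integral>z. norm (case (y, z) of (y, z) \<Rightarrow> F y z) \<partial>lborel) \<le> norm (a y * (\<integral>z. b z \<partial>lborel))"
      proof (intro AE_I2)
        fix y
        have "(\<integral>z. norm (F y z) \<partial>lborel) \<le> (\<integral>z. a y * b z \<partial>lborel)"
        proof (rule integral_mono)
          show "integrable lborel (\<lambda>z. a y * b z)" using ib by simp
          show "integrable lborel (\<lambda>z. norm (F y z))"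
            by (rule Bochner_Integration.integrable_bound[where f="\<lambda>z. a y * b z"])
               (use ib b a0 b0 in \<open>auto intro!: AE_I2\<close>)
        qed (use b in auto)
        moreover have "0 \<le> (\<integral>z. norm (F y z) \<partial>lborel)" by (simp add: integral_nonneg_AE)
        ultimately show "norm (\<integral>z. norm (case (y, z) of (y, z) \<Rightarrow> F y z) \<partial>lborel) \<le> norm (a y * (\<integral>z. b z \<partial>lborel))"
          using a0[of y] by (simp add: integral_nonneg_AE b0)
      qed
    qed
    show "AE y in lborel. integrable lborel (\<lambda>z. case (y, z) of (y, z) \<Rightarrow> F y z)"
    proof (intro AE_I2)
      fix y
      show "integrable lborel (\<lambda>z. case (y, z) of (y, z) \<Rightarrow> F y z)"
        by (rule Bochner_Integration.integrable_bound[where f="\<lambda>z. a y * b z"])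
           (use ib b a0 b0 in \<open>auto intro!: AE_I2\<close>)
    qed
  qed
  show ?thesis using lborel_pair.Fubini_integral[OF int] by simp
qed

lemma set_int_bound_A:
  fixes g :: "real \<Rightarrow> complex"
  assumes m: "(\<lambda>y. indicator A y *\<^sub>R g y) \<in> borel_measurable lborel" and h: "integrable lborel h"
    and b: "\<And>y. y \<in> A \<Longrightarrow> cmod (g y) \<le> h y" and h0: "\<And>y. 0 \<le> h y"
  shows "cmod (set_lebesgue_integral lborel A g) \<le> (\<integral>y. h y \<partial>lborel)"
    and "set_integrable lborel A g"
proof -
  have i1: "integrable lborel (\<lambda>y. indicator A y *\<^sub>R g y)"
    by (rule Bochner_Integration.integrable_bound[OF h m]) (use b h0 in \<open>auto simp: indicator_def intro!: AE_I2\<close>)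
  then show "set_integrable lborel A g" by (simp add: set_integrable_def)
  have "cmod (set_lebesgue_integral lborel A g) \<le> (\<integral>y. norm (indicator A y *\<^sub>R g y) \<partial>lborel)"
    unfolding set_lebesgue_integral_def by (rule integral_norm_bound)
  also have "\<dots> \<le> (\<integral>y. h y \<partial>lborel)"
  proof (rule integral_mono)
    show "integrable lborel (\<lambda>y. norm (indicator A y *\<^sub>R g y))" using i1 by (rule integrable_norm)
    show "integrable lborel h" by fact
    show "norm (indicator A y *\<^sub>R g y) \<le> h y" for y
      using b[of y] h0[of y] by (auto simp: indicator_def)
  qed
  finally show "cmod (set_lebesgue_integral lborel A g) \<le> (\<integral>y. h y \<partial>lborel)" .
qed

lemma C0p_bound: "C0p f \<Longrightarrow> \<exists>M\<ge>0. \<forall>z\<ge>0. cmod (f z) \<le> M"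
proof -
  assume "C0p f"
  then obtain a where a: "\<forall>x\<in>f ` {0..}. cmod x \<le> a" unfolding C0p_def bounded_iff by blast
  have "cmod (f 0) \<le> a" using a by auto
  then have "0 \<le> a" using norm_ge_zero[of "f 0"] by linarith
  then show ?thesis using a by (intro exI[of _ a]) auto
qed

lemma C0p_meas[measurable]: "C0p f \<Longrightarrow> (\<lambda>z. indicator {0..} z *\<^sub>R f z) \<in> borel_measurable lborel"
  unfolding C0p_def
  using borel_measurable_continuous_on_indicator[of "{0::real..}" f] by (simp add: measurable_lborel1)

context vol
begin

lemma op_props:
  fixes G :: "real \<Rightarrow> real \<Rightarrow> complex"
  assumes cG: "continuous_on UNIV (\<lambda>(x,z). G x z)" and bG: "\<And>x z. cmod (G x z) \<le> C * cmod (ut z)"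
    and f: "C0p f" and M: "\<And>z. 0 \<le> z \<Longrightarrow> cmod (f z) \<le> M" and M0: "0 \<le> M" and C0: "0 \<le> C"
  shows "set_integrable lborel {0..} (\<lambda>z. G x z * f z)"
    and "cmod (set_lebesgue_integral lborel {0..} (\<lambda>z. G x z * f z)) \<le> C * M * NN"
    and "continuous_on UNIV (\<lambda>x. set_lebesgue_integral lborel {0..} (\<lambda>z. G x z * f z))"
proof -
  have cGx: "continuous_on UNIV (G x)" for x
  proof -
    have "continuous_on UNIV (\<lambda>z. (\<lambda>(x,z). G x z) (x, z))"
      by (rule continuous_on_compose2[OF cG]) (auto intro!: continuous_intros)
    then show ?thesis by simp
  qed
  have mG[measurable]: "G x \<in> borel_measurable lborel" for x by (rule cont_meas[OF cGx])
  have m: "(\<lambda>z. indicator {0..} z *\<^sub>R (G x z * f z)) \<in> borel_measurable lborel" for x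
  proof -
    have "(\<lambda>z. G x z * (indicator {0..} z *\<^sub>R f z)) \<in> borel_measurable lborel"
      using C0p_meas[OF f] by measurable
    then show ?thesis by (simp add: indicator_def)
  qed
  have bb: "cmod (G x z * f z) \<le> C * M * cmod (ut z)" if "z \<in> {0..}" for x z
    using that mult_mono[OF bG[of x z] M[of z]] C0 M0 by (auto simp: norm_mult mult_ac)
  have h0: "0 \<le> C * M * cmod (ut z)" for z using C0 M0 by simp
  show "set_integrable lborel {0..} (\<lambda>z. G x z * f z)"
    by (rule set_int_bound_A(2)[OF m _ bb h0]) (use int_cmod_ut in simp)
  show "cmod (set_lebesgue_integral lborel {0..} (\<lambda>z. G x z * f z)) \<le> C * M * NN"
    using set_int_bound_A(1)[OF m _ bb h0, of x] int_cmod_ut unfolding NN_def by simp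
  show "continuous_on UNIV (\<lambda>x. set_lebesgue_integral lborel {0..} (\<lambda>z. G x z * f z))"
    unfolding set_lebesgue_integral_def
  proof (rule param_cont[where g="\<lambda>z. C * M * cmod (ut z)"])
    show "\<And>p. p \<in> UNIV \<Longrightarrow> (\<lambda>z. indicator {0..} z *\<^sub>R (G p z * f z)) \<in> borel_measurable lborel" using m by auto
    show "norm (indicator {0..} s *\<^sub>R (G p s * f s)) \<le> C * M * cmod (ut s)" for p s
      using bb[of s p] h0[of s] by (auto simp: indicator_def)
    show "integrable lborel (\<lambda>z. C * M * cmod (ut z))" using int_cmod_ut by simp
    show "AE s in lborel. continuous (at p within UNIV) (\<lambda>q. indicator {0..} s *\<^sub>R (G q s * f s))" for p
    proof (intro AE_I2)
      fix s
      have "continuous_on UNIV (\<lambda>q. (\<lambda>(x,z). G x z) (q, s))"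
        by (rule continuous_on_compose2[OF cG]) (auto intro!: continuous_intros)
      then have "continuous_on UNIV (\<lambda>q. indicator {0..} s *\<^sub>R (G q s * f s))"
        by (intro continuous_intros) simp
      then show "continuous (at p within UNIV) (\<lambda>q. indicator {0..} s *\<^sub>R (G q s * f s))"
        by (simp add: continuous_on_eq_continuous_at)
    qed
  qed
qed

end

context vol
begin

definition TT :: "complex \<Rightarrow> (real \<Rightarrow> complex) \<Rightarrow> real \<Rightarrow> complex" where
  "TT k f x = (\<i>/2) * set_lebesgue_integral lborel {x..}
      (\<lambda>y. cnj (u y) * set_lebesgue_integral lborel {y..}
            (\<lambda>z. E k (y - z) * ut z * f z))"

lemma TT_rep:
  assumes k: "k \<in> Kdom" and f: "C0p f" and x: "0 \<le> x"
  shows "TT k f x = set_lebesgue_integral lborel {0..} (\<lambda>z. K1 k x z * f z)"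
proof -
  obtain M where M0: "0 \<le> M" and M: "\<And>z. 0 \<le> z \<Longrightarrow> cmod (f z) \<le> M" using C0p_bound[OF f] by blast
  define f0 where "f0 z = indicator {0..} z *\<^sub>R f z" for z
  have mf0[measurable]: "f0 \<in> borel_measurable lborel" unfolding f0_def using C0p_meas[OF f] .
  have Mf0: "cmod (f0 z) \<le> M" for z using M[of z] M0 by (auto simp: f0_def indicator_def)
  define F where "F y z = (if x \<le> y \<and> y \<le> z then (\<i>/2) * (cnj (u y) * E k (y - z) * ut z * f0 z) else 0)" for y z
  have mF: "(\<lambda>(y,z). F y z) \<in> borel_measurable (lborel \<Otimes>\<^sub>M lborel)"
    unfolding F_def by measurable
  have bF: "cmod (F y z) \<le> (cmod (u y) / 2) * (M * cmod (ut z))" for y z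
  proof -
    have "cmod (f0 z) * (cmod (u y) * cmod (ut z)) \<le> M * (cmod (u y) * cmod (ut z))"
      by (rule mult_right_mono[OF Mf0]) simp
    then show ?thesis using M0 by (auto simp: F_def norm_mult normE[OF k] mult_ac)
  qed
  have sw: "(\<integral>y. (\<integral>z. F y z \<partial>lborel) \<partial>lborel) = (\<integral>z. (\<integral>y. F y z \<partial>lborel) \<partial>lborel)"
    by (rule fubini_swap[OF mF bF]) (use M0 int_cmod_u int_cmod_ut in auto)
  have L: "(\<integral>z. F y z \<partial>lborel) = (\<i>/2) * (indicator {x..} y *\<^sub>R (cnj (u y) *
      set_lebesgue_integral lborel {y..} (\<lambda>z. E k (y - z) * ut z * f z)))" for y
  proof (cases "x \<le> y")
    case True
    have "(\<integral>z. F y z \<partial>lborel) = (\<integral>z. ((\<i>/2) * cnj (u y)) * (indicator {y..} z *\<^sub>R (E k (y - z) * ut z * f z)) \<partial>lborel)"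
      by (rule Bochner_Integration.integral_cong) (use True x in \<open>auto simp: F_def f0_def indicator_def\<close>)
    also have "\<dots> = (\<i>/2) * cnj (u y) * set_lebesgue_integral lborel {y..} (\<lambda>z. E k (y - z) * ut z * f z)"
      unfolding set_lebesgue_integral_def by (rule integral_mult_right_zero)
    finally show ?thesis using True by simp
  next
    case False
    then show ?thesis by (simp add: F_def)
  qed
  have R: "(\<integral>y. F y z \<partial>lborel) = indicator {0..} z *\<^sub>R (K1 k x z * f z)" for z
  proof (cases "0 \<le> z")
    case True
    have "(\<integral>y. F y z \<partial>lborel) = (\<integral>y. ((\<i>/2) * ut z * f z) * (indicator {x..z} y *\<^sub>R (cnj (u y) * E k (y - z))) \<partial>lborel)"
      by (rule Bochner_Integration.integral_cong) (use True x in \<open>auto simp: F_def f0_def indicator_def\<close>)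
    also have "\<dots> = (\<i>/2) * ut z * f z * set_lebesgue_integral lborel {x..z} (\<lambda>y. cnj (u y) * E k (y - z))"
      unfolding set_lebesgue_integral_def by (rule integral_mult_right_zero)
    finally show ?thesis using True by (simp add: K1_def mult_ac)
  next
    case False
    then have "F y z = 0" for y using x by (auto simp: F_def)
    then show ?thesis using False by simp
  qed
  have "TT k f x = (\<integral>y. (\<i>/2) * (indicator {x..} y *\<^sub>R (cnj (u y) *
      set_lebesgue_integral lborel {y..} (\<lambda>z. E k (y - z) * ut z * f z))) \<partial>lborel)"
    unfolding TT_def set_lebesgue_integral_def by (rule integral_mult_right_zero[symmetric])
  also have "\<dots> = (\<integral>y. (\<integral>z. F y z \<partial>lborel) \<partial>lborel)"
    unfolding L ..
  also have "\<dots> = (\<integral>z. indicator {0..} z *\<^sub>R (K1 k x z * f z) \<partial>lborel)"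
    unfolding sw R ..
  finally show ?thesis unfolding set_lebesgue_integral_def .
qed

end

context vol
begin

lemma cK1s: "k \<in> Kdom \<Longrightarrow> continuous_on UNIV (\<lambda>s. K1 k x s)"
  using cont_PP_comp[OF cont_K1, of UNIV "\<lambda>s. x" "\<lambda>s. s" "\<lambda>s. k"] by (auto intro!: continuous_intros)

lemma cKit2: "k \<in> Kdom \<Longrightarrow> continuous_on UNIV (\<lambda>(s,z). Kit n k s z)"
  using cont_PP_comp[OF cont_Kit, of UNIV "\<lambda>p. fst p" "\<lambda>p. snd p" "\<lambda>p. k"]
  continuous_on_fst[OF continuous_on_id] continuous_on_snd[OF continuous_on_id]
  by (auto intro!: continuous_intros simp: case_prod_beta)

lemma cLk2: "k \<in> Kdom \<Longrightarrow> continuous_on UNIV (\<lambda>(s,z). Lk s z k)"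
  using cont_PP_comp[OF cont_Lk, of UNIV "\<lambda>p. fst p" "\<lambda>p. snd p" "\<lambda>p. k"]
  continuous_on_fst[OF continuous_on_id] continuous_on_snd[OF continuous_on_id]
  by (auto intro!: continuous_intros simp: case_prod_beta)

lemma comp_rep:
  fixes G :: "real \<Rightarrow> real \<Rightarrow> complex"
  assumes k: "k \<in> Kdom" and cG: "continuous_on UNIV (\<lambda>(s,z). G s z)"
    and bG: "\<And>s z. cmod (G s z) \<le> C * cmod (ut z)" and C0: "0 \<le> C"
    and G0: "\<And>s z. z < s \<Longrightarrow> G s z = 0" and f: "C0p f" and x: "0 \<le> x"
  shows "set_lebesgue_integral lborel {0..} (\<lambda>s. K1 k x s * set_lebesgue_integral lborel {0..} (\<lambda>z. G s z * f z))
       = set_lebesgue_integral lborel {0..} (\<lambda>z. set_lebesgue_integral lborel {x..z} (\<lambda>s. K1 k x s * G s z) * f z)"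
proof -
  obtain M where M0: "0 \<le> M" and M: "\<And>z. 0 \<le> z \<Longrightarrow> cmod (f z) \<le> M" using C0p_bound[OF f] by blast
  define f0 where "f0 z = indicator {0..} z *\<^sub>R f z" for z
  have mf0[measurable]: "f0 \<in> borel_measurable lborel" unfolding f0_def using C0p_meas[OF f] .
  have Mf0: "cmod (f0 z) \<le> M" for z using M[of z] M0 by (auto simp: f0_def indicator_def)
  have mK[measurable]: "K1 k x \<in> borel_measurable lborel" using cont_meas[OF cK1s[OF k]] by simp
  have mG[measurable]: "(\<lambda>(s,z). G s z) \<in> borel_measurable (lborel \<Otimes>\<^sub>M lborel)" by (rule cont_meas2[OF cG])
  define F where "F s z = indicator {0..} s *\<^sub>R (K1 k x s * (G s z * f0 z))" for s z
  have mF: "(\<lambda>(s,z). F s z) \<in> borel_measurable (lborel \<Otimes>\<^sub>M lborel)"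
    unfolding F_def by measurable
  have bF: "cmod (F s z) \<le> (cc * cmod (ut s)) * (C * M * cmod (ut z))" for s z
  proof -
    have "cmod (K1 k x s) * (cmod (G s z) * cmod (f0 z)) \<le> (cc * cmod (ut s)) * (C * cmod (ut z) * M)"
      by (intro mult_mono K1_bound[OF k] bG Mf0) (auto simp: cc_nonneg C0)
    then show ?thesis using cc_nonneg C0 M0 by (auto simp: F_def norm_mult indicator_def mult_ac)
  qed
  have sw: "(\<integral>s. (\<integral>z. F s z \<partial>lborel) \<partial>lborel) = (\<integral>z. (\<integral>s. F s z \<partial>lborel) \<partial>lborel)"
    by (rule fubini_swap[OF mF bF]) (use M0 C0 cc_nonneg int_cmod_ut in auto)
  have L: "(\<integral>z. F s z \<partial>lborel) = indicator {0..} s *\<^sub>R (K1 k x s * set_lebesgue_integral lborel {0..} (\<lambda>z. G s z * f z))" for s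
  proof -
    have "(\<integral>z. F s z \<partial>lborel) = (\<integral>z. (indicator {0..} s *\<^sub>R K1 k x s) * (indicator {0..} z *\<^sub>R (G s z * f z)) \<partial>lborel)"
      by (rule Bochner_Integration.integral_cong) (auto simp: F_def f0_def indicator_def)
    also have "\<dots> = (indicator {0..} s *\<^sub>R K1 k x s) * set_lebesgue_integral lborel {0..} (\<lambda>z. G s z * f z)"
      unfolding set_lebesgue_integral_def by (rule integral_mult_right_zero)
    finally show ?thesis by (simp add: indicator_def)
  qed
  have R: "(\<integral>s. F s z \<partial>lborel) = indicator {0..} z *\<^sub>R (set_lebesgue_integral lborel {x..z} (\<lambda>s. K1 k x s * G s z) * f z)" for z
  proof -
    have "(\<integral>s. F s z \<partial>lborel) = (\<integral>s. f0 z * (indicator {x..z} s *\<^sub>R (K1 k x s * G s z)) \<partial>lborel)"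
    proof (rule Bochner_Integration.integral_cong)
      fix s
      show "F s z = f0 z * (indicator {x..z} s *\<^sub>R (K1 k x s * G s z))"
      proof (cases "s < x")
        case True then show ?thesis by (simp add: F_def K1_zero indicator_def)
      next
        case False
        show ?thesis
        proof (cases "z < s")
          case True then show ?thesis by (simp add: F_def G0 indicator_def)
        next
          case False
          then show ?thesis using \<open>\<not> s < x\<close> x by (auto simp: F_def indicator_def mult_ac)
        qed
      qed
    qed simp
    also have "\<dots> = f0 z * set_lebesgue_integral lborel {x..z} (\<lambda>s. K1 k x s * G s z)"
      unfolding set_lebesgue_integral_def by (rule integral_mult_right_zero)
    finally show ?thesis by (simp add: f0_def indicator_def mult_ac)
  qed
  have "set_lebesgue_integral lborel {0..} (\<lambda>s. K1 k x s * set_lebesgue_integral lborel {0..} (\<lambda>z. G s z * f z))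
      = (\<integral>s. (\<integral>z. F s z \<partial>lborel) \<partial>lborel)"
    unfolding L set_lebesgue_integral_def ..
  also have "\<dots> = (\<integral>z. (\<integral>s. F s z \<partial>lborel) \<partial>lborel)" by (rule sw)
  also have "\<dots> = set_lebesgue_integral lborel {0..} (\<lambda>z. set_lebesgue_integral lborel {x..z} (\<lambda>s. K1 k x s * G s z) * f z)"
    unfolding R set_lebesgue_integral_def ..
  finally show ?thesis .
qed

end

context vol
begin

lemma K1_Lk:
  assumes k: "k \<in> Kdom"
  shows "set_lebesgue_integral lborel {x..z} (\<lambda>s. K1 k x s * Lk s z k) = Lk x z k - K1 k x z"
proof -
  define fn where "fn n s = (indicator {x..z} s *\<^sub>R K1 k x s) * Kit n k s z" for n s
  have cKn: "continuous_on UNIV (\<lambda>s. Kit n k s z)" for n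
    using cont_PP_comp[OF cont_Kit, of UNIV "\<lambda>s. s" "\<lambda>s. z" "\<lambda>s. k"] k by (auto intro!: continuous_intros)
  have si: "set_integrable lborel {x..z} (\<lambda>s. K1 k x s * Kit n k s z)" for n
    by (rule borel_integrable_atLeastAtMost')
       (intro continuous_intros continuous_on_subset[OF cK1s[OF k]] continuous_on_subset[OF cKn], auto)
  have int: "integrable lborel (fn n)" for n
    using si[of n] unfolding set_integrable_def fn_def by (simp add: mult_ac)
  have bfn: "norm (fn n s) \<le> cc * cmod (ut s) * (cc * B * ((cc * NN) ^ n / fact n))" for n s
  proof -
    have "cmod (K1 k x s) * cmod (Kit n k s z) \<le> cc * cmod (ut s) * (cc * B * ((cc * NN) ^ n / fact n))"
      by (intro mult_mono K1_bound[OF k] Kit_bound3[OF k]) (auto simp: cc_nonneg)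
    moreover have "0 \<le> cc * cmod (ut s) * (cc * B * ((cc * NN) ^ n / fact n))"
      using cc_nonneg B0 NN_nonneg by simp
    ultimately show ?thesis by (auto simp: fn_def norm_mult indicator_def simp del: times_divide_eq_right)
  qed
  have sumn: "summable (\<lambda>n. norm (fn n s))" for s
  proof -
    have "summable (\<lambda>n. (indicator {x..z} s * cmod (K1 k x s)) * cmod (Kit n k s z))"
      by (rule summable_mult[OF summable_Kit_norm[OF k]])
    then show ?thesis by (simp add: fn_def norm_mult)
  qed
  have sumi: "summable (\<lambda>n. \<integral>s. norm (fn n s) \<partial>lborel)"
  proof (rule summable_comparison_test[OF _ sm_exp[of "NN * (cc * cc * B)" "cc * NN"]])
    show "\<exists>N. \<forall>n\<ge>N. norm (\<integral>s. norm (fn n s) \<partial>lborel) \<le> NN * (cc * cc * B) * ((cc * NN) ^ n / fact n)"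
    proof (intro exI[of _ 0] allI impI)
      fix n :: nat
      have "(\<integral>s. norm (fn n s) \<partial>lborel) \<le> (\<integral>s. cc * cmod (ut s) * (cc * B * ((cc * NN) ^ n / fact n)) \<partial>lborel)"
        by (rule integral_mono) (use int int_cmod_ut bfn in auto)
      also have "\<dots> = NN * (cc * cc * B) * ((cc * NN) ^ n / fact n)"
        unfolding NN_def by (simp add: mult_ac)
      finally show "norm (\<integral>s. norm (fn n s) \<partial>lborel) \<le> NN * (cc * cc * B) * ((cc * NN) ^ n / fact n)"
        by (simp add: integral_nonneg_AE)
    qed
  qed
  have "(\<integral>s. (\<Sum>n. fn n s) \<partial>lborel) = (\<Sum>n. integral\<^sup>L lborel (fn n))"
    by (rule integral_suminf) (use int sumn sumi in auto)
  moreover have "(\<Sum>n. fn n s) = indicator {x..z} s *\<^sub>R (K1 k x s * Lk s z k)" for s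
  proof -
    have "(\<Sum>n. fn n s) = (indicator {x..z} s *\<^sub>R K1 k x s) * (\<Sum>n. Kit n k s z)"
      unfolding fn_def by (rule suminf_mult[OF summable_Kit[OF k]])
    then show ?thesis unfolding Lk_def by simp
  qed
  moreover have "integral\<^sup>L lborel (fn n) = Kit (Suc n) k x z" for n
    unfolding fn_def by (simp add: set_lebesgue_integral_def mult_ac)
  moreover have "(\<Sum>n. Kit (Suc n) k x z) = Lk x z k - K1 k x z"
    unfolding Lk_def using suminf_split_head[OF summable_Kit[OF k, of x z]] by simp
  ultimately show ?thesis unfolding set_lebesgue_integral_def by simp
qed

end

lemma supn_ge: "C0p f \<Longrightarrow> 0 \<le> z \<Longrightarrow> cmod (f z) \<le> supn f"
  unfolding supn_def C0p_def
  by (rule cSUP_upper) (auto simp: bounded_iff bdd_above_def)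

lemma supn_nonneg: "C0p f \<Longrightarrow> 0 \<le> supn f"
  using supn_ge[of f 0] norm_ge_zero[of "f 0"] by linarith

context vol
begin

lemma cK12: "k \<in> Kdom \<Longrightarrow> continuous_on UNIV (\<lambda>(s,z). K1 k s z)"
  using cont_PP_comp[OF cont_K1, of UNIV "\<lambda>p. fst p" "\<lambda>p. snd p" "\<lambda>p. k"]
  continuous_on_fst[OF continuous_on_id] continuous_on_snd[OF continuous_on_id]
  by (auto intro!: continuous_intros simp: case_prod_beta)

definition RR :: "complex \<Rightarrow> (real \<Rightarrow> complex) \<Rightarrow> real \<Rightarrow> complex" where
  "RR k f x = f x + set_lebesgue_integral lborel {0..} (\<lambda>z. Lk x z k * f z)"

definition CL where "CL = cc * exp (cc * NN)"
lemma CL0: "0 \<le> CL" unfolding CL_def using cc_nonneg by simp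

lemma opK:
  assumes k: "k \<in> Kdom" and f: "C0p f"
  shows "set_integrable lborel {0..} (\<lambda>z. K1 k x z * f z)"
    and "cmod (set_lebesgue_integral lborel {0..} (\<lambda>z. K1 k x z * f z)) \<le> cc * supn f * NN"
    and "continuous_on UNIV (\<lambda>x. set_lebesgue_integral lborel {0..} (\<lambda>z. K1 k x z * f z))"
  using op_props[OF cK12[OF k] K1_bound[OF k] f supn_ge[OF f] supn_nonneg[OF f] cc_nonneg] by auto

lemma opL:
  assumes k: "k \<in> Kdom" and f: "C0p f"
  shows "set_integrable lborel {0..} (\<lambda>z. Lk x z k * f z)"
    and "cmod (set_lebesgue_integral lborel {0..} (\<lambda>z. Lk x z k * f z)) \<le> CL * supn f * NN"
    and "continuous_on UNIV (\<lambda>x. set_lebesgue_integral lborel {0..} (\<lambda>z. Lk x z k * f z))"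
proof -
  have b: "cmod (Lk x z k) \<le> CL * cmod (ut z)" for x z
    using Lk_bound[OF k, of x z] unfolding CL_def by (simp add: mult_ac)
  show "set_integrable lborel {0..} (\<lambda>z. Lk x z k * f z)"
    and "cmod (set_lebesgue_integral lborel {0..} (\<lambda>z. Lk x z k * f z)) \<le> CL * supn f * NN"
    and "continuous_on UNIV (\<lambda>x. set_lebesgue_integral lborel {0..} (\<lambda>z. Lk x z k * f z))"
    using op_props[OF cLk2[OF k] b f supn_ge[OF f] supn_nonneg[OF f] CL0] by auto
qed

lemma C0p_cong: "C0p f \<Longrightarrow> (\<And>x. 0 \<le> x \<Longrightarrow> g x = f x) \<Longrightarrow> C0p g"
proof -
  assume f: "C0p f" and e: "\<And>x. 0 \<le> x \<Longrightarrow> g x = f x"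
  have "g ` {0..} = f ` {0..}" using e by force
  moreover have "continuous_on {0..} g" using f e unfolding C0p_def by (metis atLeast_iff continuous_on_cong)
  ultimately show ?thesis using f unfolding C0p_def by simp
qed

lemma C0p_fun: "continuous_on UNIV g \<Longrightarrow> (\<And>x. 0 \<le> x \<Longrightarrow> cmod (g x) \<le> M) \<Longrightarrow> C0p g"
  unfolding C0p_def bounded_iff by (auto intro: continuous_on_subset)

lemma C0p_TT: assumes k: "k \<in> Kdom" and f: "C0p f" shows "C0p (TT k f)"
proof -
  have "C0p (\<lambda>x. set_lebesgue_integral lborel {0..} (\<lambda>z. K1 k x z * f z))"
    by (rule C0p_fun[OF opK(3)[OF k f] opK(2)[OF k f]])
  then show ?thesis by (rule C0p_cong) (simp add: TT_rep[OF k f])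
qed

lemma C0p_RR: assumes k: "k \<in> Kdom" and f: "C0p f" shows "C0p (RR k f)"
proof -
  have "continuous_on UNIV (\<lambda>x. set_lebesgue_integral lborel {0..} (\<lambda>z. Lk x z k * f z))" by (rule opL(3)[OF k f])
  then have c: "continuous_on {0..} (RR k f)"
    using f unfolding RR_def C0p_def by (auto intro!: continuous_intros intro: continuous_on_subset)
  have "cmod (RR k f x) \<le> supn f + CL * supn f * NN" if "0 \<le> x" for x
    unfolding RR_def using norm_triangle_ineq[of "f x" "set_lebesgue_integral lborel {0..} (\<lambda>z. Lk x z k * f z)"] supn_ge[OF f that] opL(2)[OF k f, of x] by linarith
  then have "bounded (RR k f ` {0..})" unfolding bounded_iff by auto
  then show ?thesis using c unfolding C0p_def by simp
qed

lemma C0p_diff: "C0p f \<Longrightarrow> C0p g \<Longrightarrow> C0p (\<lambda>x. f x - g x)"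
  unfolding C0p_def
  by (auto intro!: continuous_intros bounded_diff simp: image_def bounded_iff)
     (metis norm_triangle_ineq4 add_mono order_trans)

lemma C0p_addc: "C0p f \<Longrightarrow> C0p g \<Longrightarrow> C0p (\<lambda>x. f x + c * g x)"
proof -
  assume f: "C0p f" and g: "C0p g"
  have "cmod (f x + c * g x) \<le> supn f + cmod c * supn g" if "0 \<le> x" for x
    using norm_triangle_ineq[of "f x" "c * g x"] supn_ge[OF f that] supn_ge[OF g that]
      mult_left_mono[OF supn_ge[OF g that], of "cmod c"] by (simp add: norm_mult)
  moreover have "continuous_on {0..} (\<lambda>x. f x + c * g x)"
    using f g unfolding C0p_def by (intro continuous_intros) auto
  ultimately show ?thesis unfolding C0p_def bounded_iff by auto
qed

lemma RR_left:
  assumes k: "k \<in> Kdom" and f: "C0p f" and x: "0 \<le> x"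
  shows "RR k f x - TT k (RR k f) x = f x"
proof -
  define \<phi> where "\<phi> s = set_lebesgue_integral lborel {0..} (\<lambda>z. Lk s z k * f z)" for s
  have c\<phi>: "C0p \<phi>" unfolding \<phi>_def by (rule C0p_fun[OF opL(3)[OF k f] opL(2)[OF k f]])
  have RRe: "RR k f = (\<lambda>s. f s + \<phi> s)" unfolding RR_def \<phi>_def by auto
  have b: "cmod (Lk x z k) \<le> CL * cmod (ut z)" for x z
    using Lk_bound[OF k, of x z] unfolding CL_def by (simp add: mult_ac)
  have "TT k (RR k f) x = set_lebesgue_integral lborel {0..} (\<lambda>s. K1 k x s * RR k f s)"
    by (rule TT_rep[OF k C0p_RR[OF k f] x])
  also have "\<dots> = set_lebesgue_integral lborel {0..} (\<lambda>s. K1 k x s * f s + K1 k x s * \<phi> s)"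
    unfolding RRe by (simp add: distrib_left)
  also have "\<dots> = set_lebesgue_integral lborel {0..} (\<lambda>s. K1 k x s * f s) + set_lebesgue_integral lborel {0..} (\<lambda>s. K1 k x s * \<phi> s)"
    by (rule set_integral_add(2)[OF opK(1)[OF k f] opK(1)[OF k c\<phi>]])
  also have "set_lebesgue_integral lborel {0..} (\<lambda>s. K1 k x s * \<phi> s)
      = set_lebesgue_integral lborel {0..} (\<lambda>z. set_lebesgue_integral lborel {x..z} (\<lambda>s. K1 k x s * Lk s z k) * f z)"
    unfolding \<phi>_def by (rule comp_rep[OF k cLk2[OF k] b CL0 Lk_zero f x])
  also have "\<dots> = set_lebesgue_integral lborel {0..} (\<lambda>z. Lk x z k * f z - K1 k x z * f z)"
    by (simp add: K1_Lk[OF k] left_diff_distrib)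
  also have "\<dots> = \<phi> x - set_lebesgue_integral lborel {0..} (\<lambda>z. K1 k x z * f z)"
    unfolding \<phi>_def by (rule set_integral_diff(2)[OF opL(1)[OF k f] opK(1)[OF k f]])
  finally show ?thesis unfolding RRe by simp
qed

lemma fixpt_zero:
  assumes k: "k \<in> Kdom" and h: "C0p h" and fx: "\<And>x. 0 \<le> x \<Longrightarrow> TT k h x = h x" and x: "0 \<le> x"
  shows "h x = 0"
proof -
  have rep: "\<forall>x. 0 \<le> x \<longrightarrow> h x = set_lebesgue_integral lborel {0..} (\<lambda>z. Kit n k x z * h z)" for n
  proof (induction n)
    case 0
    show ?case using fx TT_rep[OF k h] by simp
  next
    case (Suc n)
    show ?case
    proof (intro allI impI)
      fix x :: real assume x: "0 \<le> x"
      have b: "cmod (Kit n k s z) \<le> (cc * ((cc * NN) ^ n / fact n)) * cmod (ut z)" for s z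
        using Kit_bound2[OF k, of n s z] by (simp add: mult_ac)
      have "h x = TT k h x" using fx[OF x] by simp
      also have "\<dots> = set_lebesgue_integral lborel {0..} (\<lambda>s. K1 k x s * h s)" by (rule TT_rep[OF k h x])
      also have "\<dots> = set_lebesgue_integral lborel {0..} (\<lambda>s. K1 k x s * set_lebesgue_integral lborel {0..} (\<lambda>z. Kit n k s z * h z))"
        by (rule set_lebesgue_integral_cong) (use Suc.IH in auto)
      also have "\<dots> = set_lebesgue_integral lborel {0..} (\<lambda>z. set_lebesgue_integral lborel {x..z} (\<lambda>s. K1 k x s * Kit n k s z) * h z)"
        by (rule comp_rep[OF k cKit2[OF k] b _ Kit_zero h x]) (use cc_nonneg NN_nonneg in simp)
      also have "\<dots> = set_lebesgue_integral lborel {0..} (\<lambda>z. Kit (Suc n) k x z * h z)" by simp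
      finally show "h x = set_lebesgue_integral lborel {0..} (\<lambda>z. Kit (Suc n) k x z * h z)" .
    qed
  qed
  have bnd: "cmod (h x) \<le> (cc * supn h * NN) * ((cc * NN) ^ n / fact n)" for n
  proof -
    have b: "cmod (Kit n k s z) \<le> (cc * ((cc * NN) ^ n / fact n)) * cmod (ut z)" for s z
      using Kit_bound2[OF k, of n s z] by (simp add: mult_ac)
    have "cmod (h x) \<le> (cc * ((cc * NN) ^ n / fact n)) * supn h * NN"
      using rep[of n] x op_props(2)[OF cKit2[OF k] b h supn_ge[OF h] supn_nonneg[OF h]] cc_nonneg NN_nonneg
      by simp
    then show ?thesis by (simp add: mult_ac)
  qed
  have lim: "(\<lambda>n. (cc * supn h * NN) * ((cc * NN) ^ n / fact n)) \<longlonglongrightarrow> 0"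
    using summable_LIMSEQ_zero[OF sm_exp[of "cc * supn h * NN" "cc * NN"]] .
  have "cmod (h x) \<le> 0"
    by (rule tendsto_lowerbound[OF lim]) (use bnd in \<open>auto intro: always_eventually\<close>)
  then show ?thesis by simp
qed

lemma RR_right:
  assumes k: "k \<in> Kdom" and f: "C0p f" and x: "0 \<le> x"
  shows "RR k (\<lambda>y. f y - TT k f y) x = f x"
proof -
  define g where "g y = f y - TT k f y" for y
  have cg: "C0p g" unfolding g_def by (rule C0p_diff[OF f C0p_TT[OF k f]])
  define h where "h y = RR k g y - f y" for y
  have ch: "C0p h" unfolding h_def by (rule C0p_diff[OF C0p_RR[OF k cg] f])
  have "TT k h y = h y" if y: "0 \<le> y" for y
  proof -
    have "TT k h y = set_lebesgue_integral lborel {0..} (\<lambda>s. K1 k y s * RR k g s - K1 k y s * f s)"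
      unfolding TT_rep[OF k ch y] h_def by (simp add: right_diff_distrib)
    also have "\<dots> = TT k (RR k g) y - TT k f y"
      unfolding TT_rep[OF k C0p_RR[OF k cg] y] TT_rep[OF k f y]
      by (rule set_integral_diff(2)[OF opK(1)[OF k C0p_RR[OF k cg]] opK(1)[OF k f]])
    also have "\<dots> = h y"
      using RR_left[OF k cg y] unfolding h_def g_def by (simp add: algebra_simps)
    finally show ?thesis .
  qed
  then have "h x = 0" by (intro fixpt_zero[OF k ch _ x])
  then show ?thesis unfolding h_def g_def by simp
qed

lemma RR_lin:
  assumes k: "k \<in> Kdom" and f: "C0p f" and g: "C0p g"
  shows "RR k (\<lambda>y. f y + c * g y) x = RR k f x + c * RR k g x"
proof -
  have "set_lebesgue_integral lborel {0..} (\<lambda>z. Lk x z k * (f z + c * g z))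
      = set_lebesgue_integral lborel {0..} (\<lambda>z. Lk x z k * f z + c * (Lk x z k * g z))"
    by (simp add: algebra_simps)
  also have "\<dots> = set_lebesgue_integral lborel {0..} (\<lambda>z. Lk x z k * f z) + c * set_lebesgue_integral lborel {0..} (\<lambda>z. Lk x z k * g z)"
    using set_integral_add(2)[OF opL(1)[OF k f] set_integrable_mult_right[OF opL(1)[OF k g], of c]] by simp
  finally show ?thesis unfolding RR_def by (simp add: algebra_simps)
qed

lemma RR_supn:
  assumes k: "k \<in> Kdom" and f: "C0p f"
  shows "supn (RR k f) \<le> (1 + CL * NN) * supn f"
  unfolding supn_def
proof (rule cSUP_least)
  show "{0::real..} \<noteq> {}" by auto
  fix x :: real assume "x \<in> {0..}"
  then have x: "0 \<le> x" by simp
  have "cmod (RR k f x) \<le> supn f + CL * supn f * NN"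
    unfolding RR_def using norm_triangle_ineq[of "f x" "set_lebesgue_integral lborel {0..} (\<lambda>z. Lk x z k * f z)"] supn_ge[OF f x] opL(2)[OF k f, of x] by linarith
  then show "cmod (RR k f x) \<le> (1 + CL * NN) * (SUP x\<in>{0..}. cmod (f x))"
    unfolding supn_def[symmetric] by (simp add: algebra_simps)
qed

end

lemma main_from_vol:
  assumes V: "vol u (utilde u) B"
  shows "\<exists>Lk :: real \<Rightarrow> real \<Rightarrow> complex \<Rightarrow> complex.
    (\<forall>k\<in>Kdom.
       (\<forall>f. C0p f \<longrightarrow> C0p (Top u k f)) \<and>
       (\<exists>R :: (real \<Rightarrow> complex) \<Rightarrow> real \<Rightarrow> complex.
          (\<forall>f. C0p f \<longrightarrow> C0p (R f)) \<and>
          (\<forall>f g c. C0p f \<longrightarrow> C0p g \<longrightarrow>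
              (\<forall>x\<ge>0. R (\<lambda>y. f y + c * g y) x = R f x + c * R g x)) \<and>
          (\<exists>C. \<forall>f. C0p f \<longrightarrow> supn (R f) \<le> C * supn f) \<and>
          (\<forall>f. C0p f \<longrightarrow> (\<forall>x\<ge>0. R f x - Top u k (R f) x = f x)) \<and>
          (\<forall>f. C0p f \<longrightarrow> (\<forall>x\<ge>0. R (\<lambda>y. f y - Top u k f y) x = f x)) \<and>
          (\<forall>f. C0p f \<longrightarrow> (\<forall>x\<ge>0.
              set_integrable lborel {0..} (\<lambda>y. Lk x y k * f y) \<and>
              R f x - f x = set_lebesgue_integral lborel {0..} (\<lambda>y. Lk x y k * f y)))) \<and>
       (\<forall>x y. 0 \<le> y \<longrightarrow> y < x \<longrightarrow> Lk x y k = 0) \<and>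
       (\<forall>x\<ge>0. \<forall>y\<ge>0. cmod (Lk x y k) \<le>
          exp (W11norm u * L1norm (utilde u)) * W11norm u * cmod (utilde u y))) \<and>
    continuous_on {(x, y, k). 0 \<le> x \<and> x < y \<and> k \<in> Kdom} (\<lambda>(x, y, k). Lk x y k)"
proof -
  interpret vol u "utilde u" B by (rule V)
  have TopTT: "Top u k = TT k" for k
    by (intro ext) (simp add: Top_def TT_def E_def)
  have L1u: "0 \<le> L1norm u" "0 \<le> L1norm (d1 u)" "0 \<le> L1norm (utilde u)"
    unfolding L1norm_def by (simp_all add: integral_nonneg_AE)
  have ccW: "cc \<le> W11norm u" unfolding cc_def W11norm_def using L1u by (simp add: L1norm_def)
  have NNe: "NN = L1norm (utilde u)" unfolding NN_def L1norm_def ..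
  show ?thesis
  proof (intro exI[of _ "\<lambda>x y k. Lk x y k"] conjI ballI)
    fix k assume k: "k \<in> Kdom"
    show "\<forall>f. C0p f \<longrightarrow> C0p (Top u k f)" using C0p_TT[OF k] TopTT by simp
    show "\<exists>R. (\<forall>f. C0p f \<longrightarrow> C0p (R f)) \<and>
          (\<forall>f g c. C0p f \<longrightarrow> C0p g \<longrightarrow> (\<forall>x\<ge>0. R (\<lambda>y. f y + c * g y) x = R f x + c * R g x)) \<and>
          (\<exists>C. \<forall>f. C0p f \<longrightarrow> supn (R f) \<le> C * supn f) \<and>
          (\<forall>f. C0p f \<longrightarrow> (\<forall>x\<ge>0. R f x - Top u k (R f) x = f x)) \<and>
          (\<forall>f. C0p f \<longrightarrow> (\<forall>x\<ge>0. R (\<lambda>y. f y - Top u k f y) x = f x)) \<and>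
          (\<forall>f. C0p f \<longrightarrow> (\<forall>x\<ge>0. set_integrable lborel {0..} (\<lambda>y. Lk x y k * f y) \<and>
              R f x - f x = set_lebesgue_integral lborel {0..} (\<lambda>y. Lk x y k * f y)))"
    proof (intro exI[of _ "RR k"] conjI allI impI)
      show "C0p (RR k f)" if "C0p f" for f using C0p_RR[OF k that] .
      show "RR k (\<lambda>y. f y + c * g y) x = RR k f x + c * RR k g x" if "C0p f" "C0p g" for f g c x
        by (rule RR_lin[OF k that])
      show "\<exists>C. \<forall>f. C0p f \<longrightarrow> supn (RR k f) \<le> C * supn f"
        using RR_supn[OF k] by blast
      show "RR k f x - Top u k (RR k f) x = f x" if "C0p f" "0 \<le> x" for f x
        using RR_left[OF k that] TopTT by simp
      show "RR k (\<lambda>y. f y - Top u k f y) x = f x" if "C0p f" "0 \<le> x" for f x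
        using RR_right[OF k that] TopTT by simp
      show "set_integrable lborel {0..} (\<lambda>y. Lk x y k * f y)" if "C0p f" "0 \<le> x" for f x
        by (rule opL(1)[OF k that(1)])
      show "RR k f x - f x = set_lebesgue_integral lborel {0..} (\<lambda>y. Lk x y k * f y)" for f x
        unfolding RR_def by simp
    qed
    show "\<forall>x y. 0 \<le> y \<longrightarrow> y < x \<longrightarrow> Lk x y k = 0" using Lk_zero by auto
    show "\<forall>x\<ge>0. \<forall>y\<ge>0. cmod (Lk x y k) \<le> exp (W11norm u * L1norm (utilde u)) * W11norm u * cmod (utilde u y)"
    proof (intro allI impI)
      fix x y :: real
      have "exp (cc * NN) \<le> exp (W11norm u * L1norm (utilde u))"
        unfolding NNe exp_le_cancel_iff by (intro mult_right_mono ccW L1u)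
      then have "cc * cmod (utilde u y) * exp (cc * NN) \<le> W11norm u * cmod (utilde u y) * exp (W11norm u * L1norm (utilde u))"
        using cc_nonneg ccW by (intro mult_mono mult_right_mono ccW) auto
      then show "cmod (Lk x y k) \<le> exp (W11norm u * L1norm (utilde u)) * W11norm u * cmod (utilde u y)"
        using Lk_bound[OF k, of x y] by (simp add: mult_ac)
    qed
  next
    show "continuous_on {(x, y, k). 0 \<le> x \<and> x < y \<and> k \<in> Kdom} (\<lambda>(x, y, k). Lk x y k)"
      by (rule continuous_on_subset[OF cont_Lk]) auto
  qed
qed

lemma sd_mvt:
  fixes f f1 f2 :: "real \<Rightarrow> real"
  assumes d1: "\<And>x. (f has_real_derivative f1 x) (at x)"
    and d2: "\<And>x. (f1 has_real_derivative f2 x) (at x)" and h: "0 < h"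
  shows "\<exists>\<xi>. s < \<xi> \<and> \<xi> < s + 2*h \<and> f (s + 2*h) - 2 * f (s + h) + f s = h^2 * f2 \<xi>"
proof -
  define g where "g r = f (r + h) - f r" for r
  have dg: "(g has_real_derivative (f1 (r + h) - f1 r)) (at r)" for r
  proof -
    have "((\<lambda>z. f (z + h)) has_real_derivative f1 (r + h)) (at r)"
      using DERIV_shift[of f "f1 (r + h)" r h, THEN iffD1, OF d1[of "r + h"]] .
    then show ?thesis unfolding g_def by (rule DERIV_diff[OF _ d1])
  qed
  have "\<exists>z. s < z \<and> z < s + h \<and> g (s + h) - g s = ((s + h) - s) * (f1 (z + h) - f1 z)"
    by (rule MVT2) (use h dg in auto)
  then obtain \<eta> where \<eta>: "s < \<eta>" "\<eta> < s + h" "g (s + h) - g s = ((s + h) - s) * (f1 (\<eta> + h) - f1 \<eta>)"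
    by blast
  have "\<exists>z. \<eta> < z \<and> z < \<eta> + h \<and> f1 (\<eta> + h) - f1 \<eta> = ((\<eta> + h) - \<eta>) * f2 z"
    by (rule MVT2) (use h d2 in auto)
  then obtain \<xi> where \<xi>: "\<eta> < \<xi>" "\<xi> < \<eta> + h" "f1 (\<eta> + h) - f1 \<eta> = ((\<eta> + h) - \<eta>) * f2 \<xi>"
    by blast
  have "f (s + 2*h) - 2 * f (s + h) + f s = g (s + h) - g s"
  proof -
    have e: "s + h + h = s + 2*h" by simp
    show ?thesis unfolding g_def e by simp
  qed
  also have "\<dots> = h * (h * f2 \<xi>)" unfolding \<eta>(3) \<xi>(3) by simp
  also have "\<dots> = h^2 * f2 \<xi>" by (simp add: power2_eq_square)
  finally have eq: "f (s + 2*h) - 2 * f (s + h) + f s = h^2 * f2 \<xi>" .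
  have "s < \<xi>" "\<xi> < s + 2*h" using \<eta> \<xi> by auto
  then show ?thesis using eq by blast
qed

lemma pieces:
  fixes F :: "real \<Rightarrow> real"
  assumes F: "\<And>a b. F integrable_on {a..b}" and h: "0 \<le> h"
  shows "integral {c..c + real k * h} F = (\<Sum>j<k. integral {c + real j * h..c + real (Suc j) * h} F)"
proof (induction k)
  case 0
  then show ?case by simp
next
  case (Suc k)
  have "integral {c..c + real k * h} F + integral {c + real k * h..c + real (Suc k) * h} F = integral {c..c + real (Suc k) * h} F"
    by (rule Henstock_Kurzweil_Integration.integral_combine) (use h F in \<open>auto simp: algebra_simps\<close>)
  then show ?case using Suc by simp
qed

lemma fam_disj:
  assumes "inj (c :: nat \<Rightarrow> int)"
  shows "disjoint_family (\<lambda>n. {real_of_int (c n)..<real_of_int (c n) + 1})"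
  unfolding disjoint_family_on_def
proof (intro ballI impI)
  fix n m :: nat assume nm: "n \<noteq> m"
  show "{real_of_int (c n)..<real_of_int (c n) + 1} \<inter> {real_of_int (c m)..<real_of_int (c m) + 1} = {}"
  proof (rule ccontr)
    assume "\<not> ?thesis"
    then obtain x where "x \<in> {real_of_int (c n)..<real_of_int (c n) + 1}" "x \<in> {real_of_int (c m)..<real_of_int (c m) + 1}" by blast
    then have "\<lfloor>x\<rfloor> = c n" "\<lfloor>x\<rfloor> = c m" by (auto simp: floor_eq_iff)
    then have "c n = c m" by simp
    then show False using assms nm by (auto dest: injD)
  qed
qed

lemma ind_enn: "0 \<le> g \<Longrightarrow> ennreal (indicator A x * g) = indicator A x * ennreal g"
  by (simp split: split_indicator)

lemma nn_ivl:
  fixes F :: "real \<Rightarrow> real"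
  assumes si: "set_integrable lborel {a..b} F" and F0: "\<And>x. 0 \<le> F x"
  shows "(\<integral>\<^sup>+x. ennreal (indicator {a..b} x * F x) \<partial>lborel) = ennreal (integral {a..b} F)"
proof -
  have "(\<integral>\<^sup>+x. ennreal (indicator {a..b} x * F x) \<partial>lborel) = ennreal (\<integral>x. indicator {a..b} x * F x \<partial>lborel)"
    by (rule nn_integral_eq_integral) (use si F0 in \<open>auto simp: set_integrable_def\<close>)
  also have "(\<integral>x. indicator {a..b} x * F x \<partial>lborel) = integral {a..b} F"
    using set_borel_integral_eq_integral(2)[OF si] by (simp add: set_lebesgue_integral_def)
  finally show ?thesis .
qed

lemma ind_split4:
  "indicator {c..c+3} x \<le> (\<Sum>i<4::nat. indicator {c + real i..<c + real i + 1} x :: ennreal)"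
proof (cases "x \<in> {c..c+3}")
  case True
  then have "x \<in> {c + real 0..<c + real 0 + 1} \<or> x \<in> {c + real 1..<c + real 1 + 1} \<or> x \<in> {c + real 2..<c + real 2 + 1} \<or> x \<in> {c + real 3..<c + real 3 + 1}"
    by auto
  then have "\<exists>i::nat. i < 4 \<and> x \<in> {c + real i..<c + real i + 1}"
  proof (elim disjE)
    assume "x \<in> {c + real 0..<c + real 0 + 1}" then show ?thesis by (intro exI[of _ 0]) simp
  next
    assume "x \<in> {c + real 1..<c + real 1 + 1}" then show ?thesis by (intro exI[of _ 1]) simp
  next
    assume "x \<in> {c + real 2..<c + real 2 + 1}" then show ?thesis by (intro exI[of _ 2]) simp
  next
    assume "x \<in> {c + real 3..<c + real 3 + 1}" then show ?thesis by (intro exI[of _ 3]) simp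
  qed
  then obtain i where i: "i < 4" "x \<in> {c + real i..<c + real i + 1}" by blast
  have "(indicator {c + real i..<c + real i + 1} x :: ennreal) \<le> (\<Sum>i<4::nat. indicator {c + real i..<c + real i + 1} x)"
    by (rule member_le_sum[where f="\<lambda>i. indicator {c + real i..<c + real i + 1} x"]) (use i in auto)
  then show ?thesis using True i by simp
next
  case False
  then show ?thesis by simp
qed

lemma int_le_global:
  fixes f :: "real \<Rightarrow> real"
  assumes f: "integrable lborel f" and f0: "\<And>x. 0 \<le> f x"
  shows "integral {a..b} f \<le> (\<integral>x. f x \<partial>lborel)"
proof -
  have si: "set_integrable lborel {a..b} f"
    unfolding set_integrable_def by (rule integrable_mult_indicator) (auto intro: f)
  have "integral {a..b} f = (\<integral>x. indicator {a..b} x * f x \<partial>lborel)"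
    using set_borel_integral_eq_integral(2)[OF si] by (simp add: set_lebesgue_integral_def)
  also have "\<dots> \<le> (\<integral>x. f x \<partial>lborel)"
    by (rule integral_mono) (use si f f0 in \<open>auto simp: set_integrable_def indicator_def\<close>)
  finally show ?thesis .
qed

lemma int_inv: "integrable lborel (\<lambda>x::real. inverse (1 + x^2))"
  using integrable_inverse_1_plus_square by (simp add: set_integrable_def einterval_def)

locale hyp =
  fixes u u1 u2 u3 :: "real \<Rightarrow> complex"
  assumes D1: "\<And>x. (u has_vector_derivative u1 x) (at x)"
    and D2: "\<And>x. (u1 has_vector_derivative u2 x) (at x)"
    and A3: "\<And>a b. a \<le> b \<Longrightarrow> set_integrable lborel {a..b} u3 \<and> u2 b - u2 a = set_lebesgue_integral lborel {a..b} u3"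
    and S3: "integrable lborel (\<lambda>x. (cmod (u3 x))^2)"
    and S1: "integrable lborel (\<lambda>x. (cmod (u1 x))^2)"
    and SW: "integrable lborel (\<lambda>x. (1 + x^2)^3 * (cmod (u x))^2)"
begin

lemma cu: "continuous_on UNIV u"
  by (intro continuous_at_imp_continuous_on ballI has_vector_derivative_continuous[OF D1])
lemma cu1: "continuous_on UNIV u1"
  by (intro continuous_at_imp_continuous_on ballI has_vector_derivative_continuous[OF D2])

lemma iu3: "(\<lambda>x. cmod (u3 x)) integrable_on {a..b}"
proof (cases "a \<le> b")
  case True
  have "set_integrable lborel {a..b} u3" using A3[OF True] by simp
  then show ?thesis by (intro set_borel_integral_eq_integral(1) set_integrable_norm)
next
  case False
  then have "{a..b} = {}" by simp
  then show ?thesis by (simp only:) (rule integrable_on_empty)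
qed

lemma u2_diff: "a \<le> b \<Longrightarrow> cmod (u2 b - u2 a) \<le> integral {a..b} (\<lambda>x. cmod (u3 x))"
proof -
  assume ab: "a \<le> b"
  have si: "set_integrable lborel {a..b} u3" using A3[OF ab] by blast
  have "cmod (u2 b - u2 a) = cmod (set_lebesgue_integral lborel {a..b} u3)" using A3[OF ab] by simp
  also have "\<dots> \<le> set_lebesgue_integral lborel {a..b} (\<lambda>x. cmod (u3 x))"
    by (rule set_integral_norm_bound[OF si])
  also have "\<dots> = integral {a..b} (\<lambda>x. cmod (u3 x))"
    by (rule set_borel_integral_eq_integral(2)[OF set_integrable_norm[OF si]])
  finally show ?thesis .
qed

lemma u2_diff_win:
  assumes "t \<in> {a..b}" "\<xi> \<in> {a..b}"
  shows "cmod (u2 t - u2 \<xi>) \<le> integral {a..b} (\<lambda>x. cmod (u3 x))"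
proof -
  have mono: "integral {p..q} (\<lambda>x. cmod (u3 x)) \<le> integral {a..b} (\<lambda>x. cmod (u3 x))" if "a \<le> p" "q \<le> b" for p q
    by (rule integral_subset_le) (use that in \<open>auto intro: iu3\<close>)
  show ?thesis
  proof (cases "\<xi> \<le> t")
    case True
    then show ?thesis using u2_diff[OF True] mono[of \<xi> t] assms by auto
  next
    case False
    then show ?thesis using u2_diff[of t \<xi>] mono[of t \<xi>] assms by (auto simp: norm_minus_commute)
  qed
qed

lemma cu2: "continuous_on UNIV u2"
proof -
  have "isCont u2 x" for x
  proof -
    define P where "P = {x - 1..x + 1}"
    define G where "G = (\<lambda>s. indicator P s *\<^sub>R u3 s)"
    have siP: "set_integrable lborel P u3" unfolding P_def using A3[of "x-1" "x+1"] by auto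
    have cP: "continuous_on P (\<lambda>y. set_lebesgue_integral lborel {x - 1..y} G)"
    proof (rule param_cont_Icc[where g="\<lambda>s. norm (G s)"])
      show "integrable lborel (\<lambda>s. norm (G s))"
        using siP unfolding set_integrable_def G_def by (rule integrable_norm)
      show "G \<in> borel_measurable lborel" using siP unfolding set_integrable_def G_def by auto
    qed (auto intro: continuous_intros)
    have eq: "u2 y = u2 (x - 1) + set_lebesgue_integral lborel {x - 1..y} G" if "y \<in> P" for y
    proof -
      have "set_lebesgue_integral lborel {x - 1..y} G = set_lebesgue_integral lborel {x - 1..y} u3"
        unfolding G_def by (rule set_lebesgue_integral_cong) (use that in \<open>auto simp: P_def\<close>)
      moreover have "u2 y - u2 (x - 1) = set_lebesgue_integral lborel {x - 1..y} u3"
      using A3[of "x - 1" y] that by (auto simp: P_def)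
    ultimately show ?thesis by (metis diff_add_cancel add.commute)
    qed
    have "continuous_on P u2"
      by (rule continuous_on_cong[THEN iffD1, OF refl _ continuous_on_add[OF continuous_on_const cP]])
         (use eq in auto)
    moreover have "x \<in> interior P" unfolding P_def by auto
    ultimately show ?thesis by (meson continuous_on_interior)
  qed
  then show ?thesis by (simp add: continuous_at_imp_continuous_on)
qed


lemma shift_int: "integral {a..b} (\<lambda>s. cmod (u (s + c))) = integral {a+c..b+c} (\<lambda>x. cmod (u x))"
proof -
  have "(\<lambda>s. cmod (u (s + c))) = (\<lambda>x. cmod (u x)) \<circ> (+) c" by (auto simp: add.commute)
  then show ?thesis using integral_shift_Icc_real[of a b "\<lambda>x. cmod (u x)" c] by simp
qed

lemma cmod_u_int: "(\<lambda>x. cmod (u x)) integrable_on {a..b}"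
  by (intro integrable_continuous_real continuous_intros continuous_on_subset[OF cu]) auto

lemma loc_pt:
  assumes h: "0 < h" and t: "t \<in> {a..a+3*h}" and s: "s \<in> {a..a+h}"
  shows "cmod (u2 t) \<le> 2 * cmod (u (s + 2*h) - 2 * u (s + h) + u s) / h^2 + 2 * integral {a..a+3*h} (\<lambda>x. cmod (u3 x))"
proof -
  define I3 where "I3 = integral {a..a+3*h} (\<lambda>x. cmod (u3 x))"
  define \<Delta> where "\<Delta> = u (s + 2*h) - 2 * u (s + h) + u s"
  have gen: "\<bar>fc t\<bar> \<le> \<bar>f (s + 2*h) - 2 * f (s + h) + f s\<bar> / h^2 + I3"
    if d1: "\<And>x. (f has_real_derivative fb x) (at x)" and d2: "\<And>x. (fb has_real_derivative fc x) (at x)"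
      and hD: "\<And>\<xi>. \<xi> \<in> {a..a+3*h} \<Longrightarrow> \<bar>fc t - fc \<xi>\<bar> \<le> I3" for f fb fc
  proof -
    obtain \<xi> where \<xi>: "s < \<xi>" "\<xi> < s + 2*h" and eq: "f (s + 2*h) - 2 * f (s + h) + f s = h^2 * fc \<xi>"
      using sd_mvt[OF d1 d2 h, of s] by blast
    have \<xi>a: "\<xi> \<in> {a..a+3*h}" using \<xi> s h by auto
    have "\<bar>fc \<xi>\<bar> = \<bar>f (s + 2*h) - 2 * f (s + h) + f s\<bar> / h^2"
      unfolding eq using h by (simp add: abs_mult)
    moreover have "\<bar>fc t\<bar> \<le> \<bar>fc \<xi>\<bar> + \<bar>fc t - fc \<xi>\<bar>" by linarith
    ultimately show ?thesis using hD[OF \<xi>a] by linarith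
  qed
  have re: "\<bar>Re (u2 t)\<bar> \<le> \<bar>Re \<Delta>\<bar> / h^2 + I3"
  proof -
    have "\<bar>Re (u2 t)\<bar> \<le> \<bar>Re (u (s + 2*h)) - 2 * Re (u (s + h)) + Re (u s)\<bar> / h^2 + I3"
    proof (rule gen[where fb="\<lambda>x. Re (u1 x)"])
      show "((\<lambda>x. Re (u x)) has_real_derivative Re (u1 x)) (at x)" for x by (rule has_field_derivative_Re[OF D1])
      show "((\<lambda>x. Re (u1 x)) has_real_derivative Re (u2 x)) (at x)" for x by (rule has_field_derivative_Re[OF D2])
      show "\<bar>Re (u2 t) - Re (u2 \<xi>)\<bar> \<le> I3" if "\<xi> \<in> {a..a+3*h}" for \<xi>
        using u2_diff_win[OF t that] abs_Re_le_cmod[of "u2 t - u2 \<xi>"] unfolding I3_def by simp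
    qed
    then show ?thesis unfolding \<Delta>_def by simp
  qed
  have im: "\<bar>Im (u2 t)\<bar> \<le> \<bar>Im \<Delta>\<bar> / h^2 + I3"
  proof -
    have "\<bar>Im (u2 t)\<bar> \<le> \<bar>Im (u (s + 2*h)) - 2 * Im (u (s + h)) + Im (u s)\<bar> / h^2 + I3"
    proof (rule gen[where fb="\<lambda>x. Im (u1 x)"])
      show "((\<lambda>x. Im (u x)) has_real_derivative Im (u1 x)) (at x)" for x by (rule has_field_derivative_Im[OF D1])
      show "((\<lambda>x. Im (u1 x)) has_real_derivative Im (u2 x)) (at x)" for x by (rule has_field_derivative_Im[OF D2])
      show "\<bar>Im (u2 t) - Im (u2 \<xi>)\<bar> \<le> I3" if "\<xi> \<in> {a..a+3*h}" for \<xi>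
        using u2_diff_win[OF t that] abs_Im_le_cmod[of "u2 t - u2 \<xi>"] unfolding I3_def by simp
    qed
    then show ?thesis unfolding \<Delta>_def by simp
  qed
  have "\<bar>Re \<Delta>\<bar> / h^2 \<le> cmod \<Delta> / h^2" "\<bar>Im \<Delta>\<bar> / h^2 \<le> cmod \<Delta> / h^2"
    by (intro divide_right_mono abs_Re_le_cmod abs_Im_le_cmod; simp)+
  then have "cmod (u2 t) \<le> 2 * cmod \<Delta> / h^2 + 2 * I3"
    using cmod_le[of "u2 t"] re im by linarith
  then show ?thesis unfolding \<Delta>_def I3_def .
qed

lemma loc_est:
  assumes h: "0 < h" and t: "t \<in> {a..a+3*h}"
  shows "cmod (u2 t) \<le> 8 * integral {a..a+3*h} (\<lambda>x. cmod (u x)) / h^3 + 2 * integral {a..a+3*h} (\<lambda>x. cmod (u3 x))"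
proof -
  define I3 where "I3 = integral {a..a+3*h} (\<lambda>x. cmod (u3 x))"
  define I0 where "I0 = integral {a..a+3*h} (\<lambda>x. cmod (u x))"
  define D where "D s = cmod (u (s + 2*h) - 2 * u (s + h) + u s)" for s
  define c where "c = (cmod (u2 t) - 2 * I3) * h^2 / 2"
  have cD: "c \<le> D s" if "s \<in> {a..a+h}" for s
  proof -
    have "cmod (u2 t) \<le> 2 * D s / h^2 + 2 * I3" using loc_pt[OF h t that] unfolding D_def I3_def .
    then have "(cmod (u2 t) - 2 * I3) * h^2 \<le> 2 * D s" using h by (simp add: field_simps)
    then show ?thesis unfolding c_def by simp
  qed
  have contD: "continuous_on UNIV D" unfolding D_def
    by (intro continuous_intros continuous_on_compose2[OF cu]) auto
  have "integral {a..a+h} (\<lambda>s. c) \<le> integral {a..a+h} D"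
    by (rule integral_le) (use cD contD in \<open>auto intro: integrable_continuous_real continuous_on_subset\<close>)
  then have hc: "h * c \<le> integral {a..a+h} D" using h by simp
  define E where "E s = cmod (u (s + 2*h)) + 2 * cmod (u (s + h)) + cmod (u s)" for s
  have contE: "continuous_on UNIV E" unfolding E_def
    by (intro continuous_intros continuous_on_compose2[OF cu]) auto
  have DE: "D s \<le> E s" for s
    unfolding D_def E_def using norm_triangle_ineq[of "u (s + 2*h) - 2 * u (s + h)" "u s"]
      norm_triangle_ineq4[of "u (s + 2*h)" "2 * u (s + h)"] by (simp add: norm_mult)
  have "integral {a..a+h} D \<le> integral {a..a+h} E"
    by (rule integral_le) (use DE contD contE in \<open>auto intro: integrable_continuous_real continuous_on_subset\<close>)
  also have "integral {a..a+h} E = integral {a..a+h} (\<lambda>s. cmod (u (s + 2*h))) + 2 * integral {a..a+h} (\<lambda>s. cmod (u (s + h))) + integral {a..a+h} (\<lambda>s. cmod (u s))"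
  proof -
    have i: "(\<lambda>s. cmod (u (s + c'))) integrable_on {a..a+h}" for c'
      by (intro integrable_continuous_real continuous_intros continuous_on_compose2[OF cu]) auto
    have i0: "(\<lambda>s. cmod (u s)) integrable_on {a..a+h}" by (rule cmod_u_int)
    have i2: "(\<lambda>s. 2 * cmod (u (s + h))) integrable_on {a..a+h}" by (intro integrable_continuous_real continuous_intros continuous_on_compose2[OF cu]) auto
    have "integral {a..a+h} E = integral {a..a+h} (\<lambda>s. cmod (u (s + 2*h)) + 2 * cmod (u (s + h))) + integral {a..a+h} (\<lambda>s. cmod (u s))"
      unfolding E_def by (rule integral_add[OF integrable_add[OF i i2] i0])
    also have "integral {a..a+h} (\<lambda>s. cmod (u (s + 2*h)) + 2 * cmod (u (s + h))) = integral {a..a+h} (\<lambda>s. cmod (u (s + 2*h))) + integral {a..a+h} (\<lambda>s. 2 * cmod (u (s + h)))"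
      by (rule integral_add[OF i i2])
    finally show ?thesis by simp
  qed
  also have "\<dots> \<le> I0 + 2 * I0 + I0"
  proof -
    have sub: "integral {a+c'..a+h+c'} (\<lambda>x. cmod (u x)) \<le> I0" if "0 \<le> c'" "c' \<le> 2*h" for c'
      unfolding I0_def by (rule integral_subset_le) (use that in \<open>auto intro: cmod_u_int\<close>)
    have "integral {a..a+h} (\<lambda>s. cmod (u s)) \<le> I0"
      unfolding I0_def by (rule integral_subset_le) (use h in \<open>auto intro: cmod_u_int\<close>)
    then show ?thesis unfolding shift_int using sub[of "2*h"] sub[of h] h by simp
  qed
  finally have "h * c \<le> 4 * I0" using hc by simp
  then have "(cmod (u2 t) - 2 * I3) * h^3 \<le> 8 * I0" unfolding c_def by (simp add: power3_eq_cube power2_eq_square field_simps)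
  then have "cmod (u2 t) - 2 * I3 \<le> 8 * I0 / h^3" using h by (simp add: field_simps)
  then show ?thesis unfolding I0_def I3_def by simp
qed


lemma iu3': "(\<lambda>x. cmod (u3 x)) integrable_on {a..b}" by (rule iu3)

lemma win_sum:
  fixes F :: "real \<Rightarrow> real"
  assumes F: "\<And>a b. F integrable_on {a..b}" and F0: "\<And>x. 0 \<le> F x" and m: "0 < m"
  shows "(\<Sum>j<m. integral {b + real j / m..b + real j / m + 3 * (1 / m)} F) \<le> 3 * integral {b..b+3} F"
proof -
  define h where "h = 1 / real m"
  have h0: "0 < h" "h \<le> 1" using m by (auto simp: h_def)
  have "integral {b + real j / m..b + real j / m + 3 * (1 / m)} F = (\<Sum>i<3. integral {(b + real i * h) + real j * h..(b + real i * h) + real (Suc j) * h} F)" for j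
  proof -
    have "integral {b + real j / m..b + real j / m + 3 * (1 / m)} F = integral {(b + real j * h)..(b + real j * h) + real (3::nat) * h} F"
      by (simp add: h_def)
    also have "\<dots> = (\<Sum>i<3. integral {(b + real j * h) + real i * h..(b + real j * h) + real (Suc i) * h} F)"
      by (rule pieces[OF F]) (use h0 in auto)
    finally show ?thesis by (simp add: algebra_simps)
  qed
  then have "(\<Sum>j<m. integral {b + real j / m..b + real j / m + 3 * (1 / m)} F) = (\<Sum>i<3. \<Sum>j<m. integral {(b + real i * h) + real j * h..(b + real i * h) + real (Suc j) * h} F)"
    by (simp add: sum.swap[of _ "{..<3::nat}"])
  also have "\<dots> = (\<Sum>i<3. integral {(b + real i * h)..(b + real i * h) + real m * h} F)"
    by (rule sum.cong[OF refl], rule pieces[OF F, symmetric]) (use h0 in auto)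
  also have "\<dots> \<le> (\<Sum>i<(3::nat). integral {b..b+3} F)"
  proof (rule sum_mono)
    fix i :: nat assume "i \<in> {..<3}"
    then have i: "i \<le> 2" by auto
    have mh: "real m * h = 1" using m by (simp add: h_def)
    have "real i * h \<le> 2" using i h0 by (metis mult_le_one of_nat_0_le_iff of_nat_le_iff order_trans less_imp_le mult_left_le mult_mono' numeral_le_iff of_nat_numeral le_numeral_extra(4) mult_le_cancel_left1 one_le_numeral)
    then show "integral {(b + real i * h)..(b + real i * h) + real m * h} F \<le> integral {b..b+3} F"
      by (intro integral_subset_le) (use mh h0 F F0 in auto)
  qed
  also have "\<dots> = 3 * integral {b..b+3} F" by simp
  finally show ?thesis .
qed

lemma block:
  assumes m: "0 < m"
  shows "integral {b..b+1} (\<lambda>x. cmod (u2 x)) \<le> 24 * (real m)^2 * integral {b..b+3} (\<lambda>x. cmod (u x)) + 6 / real m * integral {b..b+3} (\<lambda>x. cmod (u3 x))"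
proof -
  define h where "h = 1 / real m"
  have h0: "0 < h" "h \<le> 1" using m by (auto simp: h_def)
  have mh: "real m * h = 1" using m by (simp add: h_def)
  have cu2': "(\<lambda>x. cmod (u2 x)) integrable_on {a..b}" for a b
    by (intro integrable_continuous_real continuous_intros continuous_on_subset[OF cu2]) auto
  define I0 where "I0 j = integral {b + real j * h..b + real j * h + 3 * h} (\<lambda>x. cmod (u x))" for j :: nat
  define I3 where "I3 j = integral {b + real j * h..b + real j * h + 3 * h} (\<lambda>x. cmod (u3 x))" for j :: nat
  have "integral {b..b+1} (\<lambda>x. cmod (u2 x)) = integral {b..b + real m * h} (\<lambda>x. cmod (u2 x))" using mh by simp
  also have "\<dots> = (\<Sum>j<m. integral {b + real j * h..b + real (Suc j) * h} (\<lambda>x. cmod (u2 x)))"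
    by (rule pieces[OF cu2']) (use h0 in auto)
  also have "\<dots> \<le> (\<Sum>j<m. integral {b + real j * h..b + real (Suc j) * h} (\<lambda>x. 8 * I0 j / h^3 + 2 * I3 j))"
  proof (rule sum_mono, rule integral_le)
    fix j x assume "x \<in> {b + real j * h..b + real (Suc j) * h}"
    then have "x \<in> {b + real j * h..b + real j * h + 3 * h}" using h0 by (auto simp: algebra_simps)
    then show "cmod (u2 x) \<le> 8 * I0 j / h^3 + 2 * I3 j" unfolding I0_def I3_def by (rule loc_est[OF h0(1)])
  qed (auto intro: cu2')
  also have "\<dots> = (\<Sum>j<m. h * (8 * I0 j / h^3 + 2 * I3 j))"
    using h0 by (simp add: algebra_simps)
  also have "\<dots> = (\<Sum>j<m. 8 / h^2 * I0 j + 2 * h * I3 j)"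
  proof (rule sum.cong[OF refl])
    fix j
    show "h * (8 * I0 j / h^3 + 2 * I3 j) = 8 / h^2 * I0 j + 2 * h * I3 j"
      using h0 by (simp add: power2_eq_square power3_eq_cube field_simps)
  qed
  also have "\<dots> = 8 / h^2 * (\<Sum>j<m. I0 j) + 2 * h * (\<Sum>j<m. I3 j)"
    by (simp add: sum_distrib_left sum.distrib)
  also have "\<dots> \<le> 8 / h^2 * (3 * integral {b..b+3} (\<lambda>x. cmod (u x))) + 2 * h * (3 * integral {b..b+3} (\<lambda>x. cmod (u3 x)))"
  proof (intro add_mono mult_left_mono)
    show "(\<Sum>j<m. I0 j) \<le> 3 * integral {b..b+3} (\<lambda>x. cmod (u x))"
      using win_sum[OF cmod_u_int _ m, of b] unfolding I0_def h_def by (simp add: field_simps)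
    show "(\<Sum>j<m. I3 j) \<le> 3 * integral {b..b+3} (\<lambda>x. cmod (u3 x))"
      using win_sum[OF iu3' _ m, of b] unfolding I3_def h_def by (simp add: field_simps)
  qed (use h0 in auto)
  also have "\<dots> = 24 * (real m)^2 * integral {b..b+3} (\<lambda>x. cmod (u x)) + 6 / real m * integral {b..b+3} (\<lambda>x. cmod (u3 x))"
    using m by (simp add: h_def field_simps power2_eq_square)
  finally show ?thesis .
qed


lemma amgm_w: "0 < (W::real) \<Longrightarrow> 2 * M * a \<le> W * a^2 + M^2 / W"
proof -
  assume W: "0 < W"
  have "0 \<le> (W * a - M)^2" by simp
  then have "2 * W * M * a \<le> W^2 * a^2 + M^2" by (simp add: power2_eq_square algebra_simps)
  have "2 * M * a = (2 * W * M * a) / W" using W by simp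
  also have "\<dots> \<le> (W^2 * a^2 + M^2) / W" by (rule divide_right_mono) (use \<open>2 * W * M * a \<le> W^2 * a^2 + M^2\<close> W in auto)
  also have "\<dots> = W * a^2 + M^2 / W" using W by (simp add: field_simps power2_eq_square)
  finally show ?thesis .
qed

lemma weight_bd:
  assumes "x \<in> {real_of_int b..real_of_int b + 3}"
  shows "(real (nat \<bar>b\<bar>) + 1)^2 \<le> 32 * (1 + x^2)"
proof -
  have "real (nat \<bar>b\<bar>) = \<bar>real_of_int b\<bar>" by simp
  moreover have "\<bar>real_of_int b\<bar> \<le> \<bar>x\<bar> + 3" using assms by auto
  ultimately have "real (nat \<bar>b\<bar>) + 1 \<le> \<bar>x\<bar> + 4" by linarith
  then have "(real (nat \<bar>b\<bar>) + 1)^2 \<le> (\<bar>x\<bar> + 4)^2" by (intro power_mono) auto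
  also have "\<dots> \<le> 32 * (1 + x^2)"
  proof -
    have "(\<bar>x\<bar> + 4)^2 = \<bar>x\<bar>^2 + 8 * \<bar>x\<bar> + 16" by (simp add: power2_eq_square algebra_simps)
    moreover have "8 * \<bar>x\<bar> \<le> \<bar>x\<bar>^2 + 16"
    proof -
      have "0 \<le> (\<bar>x\<bar> - 4)^2" by simp
      then show ?thesis by (simp add: power2_eq_square algebra_simps)
    qed
    moreover have "\<bar>x\<bar>^2 = x^2" by simp
    moreover have "0 \<le> x^2" by simp
    ultimately show ?thesis by (smt (verit))
  qed
  finally show ?thesis .
qed

definition G :: "real \<Rightarrow> real" where
  "G x = 12 * ((1 + x^2)^3 * (cmod (u x))^2) + 3 * (cmod (u3 x))^2"

lemma locint: "integrable lborel f \<Longrightarrow> (f::real \<Rightarrow> real) integrable_on {a..b}"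
  using integrable_on_lborel integrable_on_subinterval[of f UNIV a b] by auto

lemma iWu: "(\<lambda>x. (1 + x^2)^3 * (cmod (u x))^2) integrable_on {a..b}" by (rule locint[OF SW])
lemma iu3sq: "(\<lambda>x. (cmod (u3 x))^2) integrable_on {a..b}" by (rule locint[OF S3])

lemma G_int: "integrable lborel G" unfolding G_def using SW S3 by simp
lemma G_nonneg: "0 \<le> G x" unfolding G_def by simp
lemma G_loc: "G integrable_on {a..b}" by (rule locint[OF G_int])

lemma block2:
  fixes b :: int
  defines "m \<equiv> nat \<bar>b\<bar> + 1"
  shows "integral {real_of_int b..real_of_int b + 1} (\<lambda>x. cmod (u2 x)) \<le> integral {real_of_int b..real_of_int b + 3} G + (36 * 32^3 + 9) / (real m)^2"
proof -
  define r where "r = real_of_int b"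
  have m0: "0 < m" unfolding m_def by simp
  have rm: "real m = real (nat \<bar>b\<bar>) + 1" unfolding m_def by simp
  have mpos: "0 < real m" using m0 by simp
  have p1: "24 * (real m)^2 * cmod (u x) \<le> 12 * ((1 + x^2)^3 * (cmod (u x))^2) + 12 * 32^3 / (real m)^2"
    if x: "x \<in> {r..r + 3}" for x
  proof -
    define W where "W = (1 + x^2)^3"
    have W0: "0 < W" unfolding W_def by (simp add: add_pos_nonneg)
    have wb: "(real m)^2 \<le> 32 * (1 + x^2)" unfolding rm using weight_bd[of x b] x unfolding r_def by simp
    have "((real m)^2)^3 \<le> (32 * (1 + x^2))^3" by (rule power_mono[OF wb]) simp
    moreover have "((real m)^2)^3 = (real m)^6" by (simp flip: power_mult)
    moreover have "(32 * (1 + x^2))^3 = 32^3 * W" unfolding W_def by (rule power_mult_distrib)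
    ultimately have w6: "(real m)^6 \<le> 32^3 * W" by simp
    have "2 * (real m)^2 * cmod (u x) \<le> W * (cmod (u x))^2 + ((real m)^2)^2 / W"
      by (rule amgm_w[OF W0])
    moreover have "((real m)^2)^2 / W \<le> 32^3 / (real m)^2"
    proof -
      have "((real m)^2)^2 * (real m)^2 \<le> 32^3 * W" using w6 by (simp flip: power_add power_mult)
      then show ?thesis using W0 mpos by (simp add: field_simps)
    qed
    ultimately have "2 * (real m)^2 * cmod (u x) \<le> W * (cmod (u x))^2 + 32^3 / (real m)^2" by linarith
    then show ?thesis unfolding W_def by linarith
  qed
  have p3: "6 / real m * cmod (u3 x) \<le> 3 * (cmod (u3 x))^2 + 3 / (real m)^2" for x
  proof -
    have "0 \<le> (cmod (u3 x) - 1 / real m)^2" by simp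
    then have "2 * (cmod (u3 x) / real m) \<le> (cmod (u3 x))^2 + 1 / (real m)^2"
      using mpos by (simp add: power2_eq_square field_simps)
    moreover have "6 / real m * cmod (u3 x) = 3 * (2 * (cmod (u3 x) / real m))" by simp
    ultimately show ?thesis by linarith
  qed
  have B: "integral {r..r+1} (\<lambda>x. cmod (u2 x)) \<le> 24 * (real m)^2 * integral {r..r+3} (\<lambda>x. cmod (u x)) + 6 / real m * integral {r..r+3} (\<lambda>x. cmod (u3 x))"
    by (rule block[OF m0])
  have B1: "24 * (real m)^2 * integral {r..r+3} (\<lambda>x. cmod (u x)) \<le> 12 * integral {r..r+3} (\<lambda>x. (1 + x^2)^3 * (cmod (u x))^2) + 36 * 32^3 / (real m)^2"
  proof -
    have "24 * (real m)^2 * integral {r..r+3} (\<lambda>x. cmod (u x)) = integral {r..r+3} (\<lambda>x. 24 * (real m)^2 * cmod (u x))"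
      by simp
    also have "\<dots> \<le> integral {r..r+3} (\<lambda>x. 12 * ((1 + x^2)^3 * (cmod (u x))^2) + 12 * 32^3 / (real m)^2)"
    proof (rule integral_le)
      show "(\<lambda>x. 24 * (real m)^2 * cmod (u x)) integrable_on {r..r+3}"
        by (intro integrable_continuous_real continuous_intros continuous_on_subset[OF cu]) auto
      show "(\<lambda>x. 12 * ((1 + x^2)^3 * (cmod (u x))^2) + 12 * 32^3 / (real m)^2) integrable_on {r..r+3}"
        by (intro integrable_continuous_real continuous_intros continuous_on_subset[OF cu]) auto
    qed (use p1 in auto)
    also have "\<dots> = 12 * integral {r..r+3} (\<lambda>x. (1 + x^2)^3 * (cmod (u x))^2) + 36 * 32^3 / (real m)^2"
      by (subst integral_add) (auto intro!: integrable_cmul iWu)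
    finally show ?thesis .
  qed
  have B3: "6 / real m * integral {r..r+3} (\<lambda>x. cmod (u3 x)) \<le> 3 * integral {r..r+3} (\<lambda>x. (cmod (u3 x))^2) + 9 / (real m)^2"
  proof -
    have "6 / real m * integral {r..r+3} (\<lambda>x. cmod (u3 x)) = integral {r..r+3} (\<lambda>x. 6 / real m * cmod (u3 x))"
      by simp
    also have "\<dots> \<le> integral {r..r+3} (\<lambda>x. 3 * (cmod (u3 x))^2 + 3 / (real m)^2)"
    proof (rule integral_le)
      show "(\<lambda>x. 6 / real m * cmod (u3 x)) integrable_on {r..r+3}"
        using integrable_cmul[OF iu3, of "6 / real m"] by simp
      show "(\<lambda>x. 3 * (cmod (u3 x))^2 + 3 / (real m)^2) integrable_on {r..r+3}"
        using integrable_add[OF integrable_cmul[OF iu3sq, of 3] integrable_const_ivl[of "3 / (real m)^2" r "r+3"]] by simp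
    qed (use p3 in auto)
    also have "\<dots> = 3 * integral {r..r+3} (\<lambda>x. (cmod (u3 x))^2) + 9 / (real m)^2"
      by (subst integral_add) (auto intro!: integrable_cmul iu3sq)
    finally show ?thesis .
  qed
  have BG: "integral {r..r+3} G = 12 * integral {r..r+3} (\<lambda>x. (1 + x^2)^3 * (cmod (u x))^2) + 3 * integral {r..r+3} (\<lambda>x. (cmod (u3 x))^2)"
    unfolding G_def by (subst integral_add) (auto intro!: integrable_cmul iu3sq iWu)
  have "(36 * 32^3 + 9) / (real m)^2 = 36 * 32^3 / (real m)^2 + 9 / (real m)^2" by (simp add: add_divide_distrib)
  then show ?thesis unfolding r_def[symmetric] using B B1 B3 BG by linarith
qed


lemma mG[measurable]: "G \<in> borel_measurable lborel" using G_int by auto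

lemma sumG:
  assumes "inj (c :: nat \<Rightarrow> int)"
  shows "(\<Sum>n. \<integral>\<^sup>+x. ennreal (indicator {real_of_int (c n)..<real_of_int (c n) + 1} x * G x) \<partial>lborel) \<le> (\<integral>\<^sup>+x. ennreal (G x) \<partial>lborel)"
proof -
  define A where "A n = {real_of_int (c n)..<real_of_int (c n) + 1}" for n
  have "(\<Sum>n. \<integral>\<^sup>+x. ennreal (indicator (A n) x * G x) \<partial>lborel) = (\<integral>\<^sup>+x. (\<Sum>n. ennreal (indicator (A n) x * G x)) \<partial>lborel)"
    by (rule nn_integral_suminf[symmetric]) (auto simp: A_def)
  also have "\<dots> \<le> (\<integral>\<^sup>+x. ennreal (G x) \<partial>lborel)"
  proof (rule nn_integral_mono)
    fix x
    have "(\<Sum>n. ennreal (indicator (A n) x * G x)) = (\<Sum>n. indicator (A n) x * ennreal (G x))"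
      by (simp only: ind_enn[OF G_nonneg])
    also have "\<dots> = (\<Sum>n. indicator (A n) x) * ennreal (G x)" by (rule ennreal_suminf_multc)
    also have "\<dots> = indicator (\<Union>n. A n) x * ennreal (G x)"
      using suminf_indicator[OF fam_disj[OF assms]] unfolding A_def by simp
    also have "\<dots> \<le> ennreal (G x)" by (simp add: indicator_def)
    finally show "(\<Sum>n. ennreal (indicator (A n) x * G x)) \<le> ennreal (G x)" .
  qed
  finally show ?thesis unfolding A_def .
qed

lemma sumG3:
  assumes "inj (c :: nat \<Rightarrow> int)"
  shows "(\<Sum>n. ennreal (integral {real_of_int (c n)..real_of_int (c n) + 3} G)) \<le> 4 * (\<integral>\<^sup>+x. ennreal (G x) \<partial>lborel)"
proof -
  have siG: "set_integrable lborel {a..b} G" for a b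
    unfolding set_integrable_def by (rule integrable_mult_indicator) (auto intro: G_int)
  have "ennreal (integral {real_of_int (c n)..real_of_int (c n) + 3} G)
      \<le> (\<Sum>i<4::nat. \<integral>\<^sup>+x. ennreal (indicator {real_of_int (c n + int i)..<real_of_int (c n + int i) + 1} x * G x) \<partial>lborel)" for n
  proof -
    define r where "r = real_of_int (c n)"
    have "ennreal (integral {r..r + 3} G) = (\<integral>\<^sup>+x. ennreal (indicator {r..r+3} x * G x) \<partial>lborel)"
      by (rule nn_ivl[symmetric, OF siG G_nonneg])
    also have "\<dots> \<le> (\<integral>\<^sup>+x. (\<Sum>i<4::nat. ennreal (indicator {r + real i..<r + real i + 1} x * G x)) \<partial>lborel)"
    proof (rule nn_integral_mono)
      fix x
      have "ennreal (indicator {r..r+3} x * G x) = indicator {r..r+3} x * ennreal (G x)"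
        by (rule ind_enn[OF G_nonneg])
      also have "\<dots> \<le> (\<Sum>i<4::nat. indicator {r + real i..<r + real i + 1} x) * ennreal (G x)"
        by (rule mult_right_mono[OF ind_split4]) simp
      also have "\<dots> = (\<Sum>i<4::nat. ennreal (indicator {r + real i..<r + real i + 1} x * G x))"
        by (simp only: sum_distrib_right ind_enn[OF G_nonneg])
      finally show "ennreal (indicator {r..r+3} x * G x) \<le> (\<Sum>i<4::nat. ennreal (indicator {r + real i..<r + real i + 1} x * G x))" .
    qed
    also have "\<dots> = (\<Sum>i<4::nat. \<integral>\<^sup>+x. ennreal (indicator {r + real i..<r + real i + 1} x * G x) \<partial>lborel)"
      by (rule nn_integral_sum) auto
    finally show ?thesis unfolding r_def by simp
  qed
  then have "(\<Sum>n. ennreal (integral {real_of_int (c n)..real_of_int (c n) + 3} G))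
      \<le> (\<Sum>n. \<Sum>i<4::nat. \<integral>\<^sup>+x. ennreal (indicator {real_of_int (c n + int i)..<real_of_int (c n + int i) + 1} x * G x) \<partial>lborel)"
    by (intro suminf_le) auto
  also have "\<dots> = (\<Sum>i<4::nat. \<Sum>n. \<integral>\<^sup>+x. ennreal (indicator {real_of_int (c n + int i)..<real_of_int (c n + int i) + 1} x * G x) \<partial>lborel)"
    by (rule suminf_sum) auto
  also have "\<dots> \<le> (\<Sum>i<4::nat. \<integral>\<^sup>+x. ennreal (G x) \<partial>lborel)"
  proof (rule sum_mono)
    fix i :: nat
    have "inj (\<lambda>n. c n + int i)" using assms by (auto simp: inj_def)
    then show "(\<Sum>n. \<integral>\<^sup>+x. ennreal (indicator {real_of_int (c n + int i)..<real_of_int (c n + int i) + 1} x * G x) \<partial>lborel) \<le> (\<integral>\<^sup>+x. ennreal (G x) \<partial>lborel)"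
      by (rule sumG)
  qed
  also have "\<dots> = 4 * (\<integral>\<^sup>+x. ennreal (G x) \<partial>lborel)" by simp
  finally show ?thesis .
qed


lemma G_fin: "(\<integral>\<^sup>+x. ennreal (G x) \<partial>lborel) < \<infinity>"
  using nn_integral_eq_integral[of lborel G] G_int G_nonneg by simp

lemma mu2[measurable]: "u2 \<in> borel_measurable lborel" using cu2 by (rule cont_meas)

lemma fam_u2:
  assumes inj: "inj (c :: nat \<Rightarrow> int)" and big: "\<And>n. real n \<le> \<bar>real_of_int (c n)\<bar>"
  shows "(\<Sum>n. \<integral>\<^sup>+x. ennreal (indicator {real_of_int (c n)..<real_of_int (c n) + 1} x * cmod (u2 x)) \<partial>lborel) < \<infinity>"
proof -
  define K :: real where "K = 36 * 32^3 + 9"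
  have siu2: "set_integrable lborel {a..b} (\<lambda>x. cmod (u2 x))" for a b
    by (rule borel_integrable_atLeastAtMost') (intro continuous_intros continuous_on_subset[OF cu2], auto)
  have tm: "(\<integral>\<^sup>+x. ennreal (indicator {real_of_int (c n)..<real_of_int (c n) + 1} x * cmod (u2 x)) \<partial>lborel)
      \<le> ennreal (integral {real_of_int (c n)..real_of_int (c n) + 3} G) + ennreal (K * inverse (real (Suc n))^2)" for n
  proof -
    define r where "r = real_of_int (c n)"
    define m where "m = nat \<bar>c n\<bar> + 1"
    have "(\<integral>\<^sup>+x. ennreal (indicator {r..<r + 1} x * cmod (u2 x)) \<partial>lborel) \<le> (\<integral>\<^sup>+x. ennreal (indicator {r..r + 1} x * cmod (u2 x)) \<partial>lborel)"
      by (intro nn_integral_mono ennreal_leI mult_right_mono) (auto simp: indicator_def)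
    also have "\<dots> = ennreal (integral {r..r + 1} (\<lambda>x. cmod (u2 x)))" by (rule nn_ivl[OF siu2]) simp
    also have "\<dots> \<le> ennreal (integral {r..r+3} G + K / (real m)^2)"
      using block2[of "c n"] unfolding r_def m_def K_def by (intro ennreal_leI) simp
    also have "\<dots> \<le> ennreal (integral {r..r+3} G) + ennreal (K * inverse (real (Suc n))^2)"
    proof -
      have mn: "real (Suc n) \<le> real m" using big[of n] unfolding m_def by simp
      have K0: "0 \<le> K" by (simp add: K_def)
      have "K / (real m)^2 \<le> K / (real (Suc n))^2"
        by (rule divide_left_mono[OF power_mono[OF mn] K0]) (use mn in \<open>auto simp del: of_nat_Suc\<close>)
      also have "\<dots> = K * inverse (real (Suc n))^2" by (simp add: divide_inverse power_inverse)
      finally have kk: "K / (real m)^2 \<le> K * inverse (real (Suc n))^2" .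
      have i0: "0 \<le> integral {r..r+3} G" by (rule integral_nonneg[OF G_loc]) (simp add: G_nonneg)
      have k0: "0 \<le> K / (real m)^2" using K0 by simp
      have "ennreal (integral {r..r+3} G + K / (real m)^2) = ennreal (integral {r..r+3} G) + ennreal (K / (real m)^2)"
        by (rule ennreal_plus[OF i0 k0])
      also have "\<dots> \<le> ennreal (integral {r..r+3} G) + ennreal (K * inverse (real (Suc n))^2)"
        by (intro add_left_mono ennreal_leI kk)
      finally show ?thesis .
    qed
    finally show ?thesis unfolding r_def .
  qed
  have s0: "summable (\<lambda>k. inverse ((real k)^2))" by (rule inverse_power_summable) simp
  have s1: "summable (\<lambda>n. inverse ((real (Suc n))^2))"
    using s0 summable_Suc_iff[of "\<lambda>k. inverse ((real k)^2)"] by blast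
  have sK: "summable (\<lambda>n. K * inverse (real (Suc n))^2)"
    using summable_mult[OF s1, of K] by (simp add: power_inverse)
  define T1 where "T1 n = ennreal (integral {real_of_int (c n)..real_of_int (c n) + 3} G)" for n
  define T2 where "T2 n = ennreal (K * inverse (real (Suc n))^2)" for n
  have le1: "(\<Sum>n. \<integral>\<^sup>+x. ennreal (indicator {real_of_int (c n)..<real_of_int (c n) + 1} x * cmod (u2 x)) \<partial>lborel)
      \<le> (\<Sum>n. T1 n + T2 n)"
    unfolding T1_def T2_def by (rule suminf_le[OF tm summableI summableI])
  have eq2: "(\<Sum>n. T1 n + T2 n) = (\<Sum>n. T1 n) + (\<Sum>n. T2 n)"
    by (rule suminf_add[symmetric, OF summableI summableI])
  have a: "(\<Sum>n. T1 n) < \<infinity>"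
  proof -
    have "(\<Sum>n. T1 n) \<le> 4 * (\<integral>\<^sup>+x. ennreal (G x) \<partial>lborel)" unfolding T1_def by (rule sumG3[OF inj])
    also have "\<dots> < \<infinity>" using G_fin by (simp add: ennreal_mult_less_top)
    finally show ?thesis .
  qed
  have b: "(\<Sum>n. T2 n) < \<infinity>"
  proof -
    have "(\<Sum>n. T2 n) \<noteq> top" unfolding T2_def by (rule ennreal_suminf_neq_top[OF sK]) (simp add: K_def)
    then show ?thesis by (simp add: top.not_eq_extremum)
  qed
  have "(\<Sum>n. T1 n) + (\<Sum>n. T2 n) < \<infinity>" using a b by (simp add: ennreal_add_less_top)
  then show ?thesis using le1 eq2 by (simp add: le_less_trans)
qed

lemma int_u2: "integrable lborel u2"
proof (rule integrableI_bounded)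
  show "u2 \<in> borel_measurable lborel" by measurable
  define cp :: "nat \<Rightarrow> int" where "cp n = int n" for n
  define cm :: "nat \<Rightarrow> int" where "cm n = - int n - 1" for n
  define Ap where "Ap n = {real_of_int (cp n)..<real_of_int (cp n) + 1}" for n
  define Am where "Am n = {real_of_int (cm n)..<real_of_int (cm n) + 1}" for n
  have ip: "inj cp" unfolding cp_def by (auto simp: inj_def)
  have im: "inj cm" unfolding cm_def by (auto simp: inj_def)
  have cov: "x \<in> (\<Union>n. Ap n) \<or> x \<in> (\<Union>n. Am n)" for x
  proof (cases "0 \<le> x")
    case True
    then have "x \<in> Ap (nat \<lfloor>x\<rfloor>)" unfolding Ap_def cp_def by auto
    then show ?thesis by blast
  next
    case False
    then have "\<lfloor>x\<rfloor> \<le> -1" by (simp add: floor_le_iff)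
    then have "0 \<le> - \<lfloor>x\<rfloor> - 1" by linarith
    then have "int (nat (- \<lfloor>x\<rfloor> - 1)) = - \<lfloor>x\<rfloor> - 1" by (rule nat_0_le)
    then have "cm (nat (- \<lfloor>x\<rfloor> - 1)) = \<lfloor>x\<rfloor>" unfolding cm_def by linarith
    then have "x \<in> Am (nat (- \<lfloor>x\<rfloor> - 1))" unfolding Am_def by simp
    then show ?thesis by blast
  qed
  have "(\<integral>\<^sup>+x. ennreal (norm (u2 x)) \<partial>lborel)
      \<le> (\<integral>\<^sup>+x. (\<Sum>n. ennreal (indicator (Ap n) x * cmod (u2 x))) + (\<Sum>n. ennreal (indicator (Am n) x * cmod (u2 x))) \<partial>lborel)"
  proof (rule nn_integral_mono)
    fix x
    have "(\<Sum>n. ennreal (indicator (Ap n) x * cmod (u2 x))) + (\<Sum>n. ennreal (indicator (Am n) x * cmod (u2 x)))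
        = ((\<Sum>n. indicator (Ap n) x) + (\<Sum>n. indicator (Am n) x)) * ennreal (cmod (u2 x))"
      by (simp only: ind_enn[OF norm_ge_zero] ennreal_suminf_multc distrib_right)
    also have "\<dots> = (indicator (\<Union>n. Ap n) x + indicator (\<Union>n. Am n) x) * ennreal (cmod (u2 x))"
      using suminf_indicator[OF fam_disj[OF ip]] suminf_indicator[OF fam_disj[OF im]]
      unfolding Ap_def Am_def by simp
    also have "\<dots> \<ge> ennreal (cmod (u2 x))"
      using cov[of x] by (auto simp: indicator_def mult_2 intro: add_increasing2)
    finally show "ennreal (norm (u2 x)) \<le> (\<Sum>n. ennreal (indicator (Ap n) x * cmod (u2 x))) + (\<Sum>n. ennreal (indicator (Am n) x * cmod (u2 x)))"
      by simp
  qed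
  also have "\<dots> = (\<Sum>n. \<integral>\<^sup>+x. ennreal (indicator (Ap n) x * cmod (u2 x)) \<partial>lborel) + (\<Sum>n. \<integral>\<^sup>+x. ennreal (indicator (Am n) x * cmod (u2 x)) \<partial>lborel)"
  proof -
    have mp: "(\<lambda>x. ennreal (indicator (Ap n) x * cmod (u2 x))) \<in> borel_measurable lborel" for n
      unfolding Ap_def by measurable
    have mm: "(\<lambda>x. ennreal (indicator (Am n) x * cmod (u2 x))) \<in> borel_measurable lborel" for n
      unfolding Am_def by measurable
    have "(\<integral>\<^sup>+x. (\<Sum>n. ennreal (indicator (Ap n) x * cmod (u2 x))) + (\<Sum>n. ennreal (indicator (Am n) x * cmod (u2 x))) \<partial>lborel)
       = (\<integral>\<^sup>+x. (\<Sum>n. ennreal (indicator (Ap n) x * cmod (u2 x))) \<partial>lborel) + (\<integral>\<^sup>+x. (\<Sum>n. ennreal (indicator (Am n) x * cmod (u2 x))) \<partial>lborel)"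
      by (rule nn_integral_add) (use mp mm in auto)
    also have "\<dots> = (\<Sum>n. \<integral>\<^sup>+x. ennreal (indicator (Ap n) x * cmod (u2 x)) \<partial>lborel) + (\<Sum>n. \<integral>\<^sup>+x. ennreal (indicator (Am n) x * cmod (u2 x)) \<partial>lborel)"
      by (simp only: nn_integral_suminf[OF mp] nn_integral_suminf[OF mm])
    finally show ?thesis .
  qed
  also have "\<dots> < \<infinity>"
  proof -
    have "(\<Sum>n. \<integral>\<^sup>+x. ennreal (indicator (Ap n) x * cmod (u2 x)) \<partial>lborel) < \<infinity>"
      unfolding Ap_def by (rule fam_u2[OF ip]) (simp add: cp_def)
    moreover have "(\<Sum>n. \<integral>\<^sup>+x. ennreal (indicator (Am n) x * cmod (u2 x)) \<partial>lborel) < \<infinity>"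
      unfolding Am_def by (rule fam_u2[OF im]) (simp add: cm_def)
    ultimately show ?thesis by (simp add: ennreal_add_less_top)
  qed
  finally show "(\<integral>\<^sup>+x. ennreal (norm (u2 x)) \<partial>lborel) < \<infinity>" .
qed


lemma iu: "integrable lborel u"
proof (rule Bochner_Integration.integrable_bound[where f="\<lambda>x. ((1 + x^2)^3 * (cmod (u x))^2 + inverse (1 + x^2)) / 2"])
  show "integrable lborel (\<lambda>x. ((1 + x^2)^3 * (cmod (u x))^2 + inverse (1 + x^2)) / 2)"
    using SW int_inv by simp
  show "u \<in> borel_measurable lborel" using cu by (rule cont_meas)
  show "AE x in lborel. norm (u x) \<le> norm (((1 + x^2)^3 * (cmod (u x))^2 + inverse (1 + x^2)) / 2)"
  proof (intro AE_I2)
    fix x :: real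
    define W where "W = (1 + x^2)^3"
    have "(1 + x^2)^1 \<le> (1 + x^2)^3" by (rule power_increasing) auto
    then have W1: "1 + x^2 \<le> W" unfolding W_def by simp
    have W0: "0 < W" using W1 by (smt (verit) zero_le_power2)
    have "2 * 1 * cmod (u x) \<le> W * (cmod (u x))^2 + 1^2 / W" by (rule amgm_w[OF W0])
    moreover have "1 / W \<le> inverse (1 + x^2)"
      using W1 by (simp add: divide_inverse le_imp_inverse_le add_pos_nonneg)
    ultimately have "2 * cmod (u x) \<le> W * (cmod (u x))^2 + inverse (1 + x^2)" by simp
    moreover have "0 \<le> inverse (1 + x^2)" by (simp add: add_nonneg_nonneg)
    ultimately show "norm (u x) \<le> norm (((1 + x^2)^3 * (cmod (u x))^2 + inverse (1 + x^2)) / 2)"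
      unfolding W_def by simp
  qed
qed

lemma u1_bounded: "\<exists>B1. \<forall>t. cmod (u1 t) \<le> B1"
proof -
  define K2 where "K2 = (\<integral>x. cmod (u2 x) \<partial>lborel)"
  define S where "S = (\<integral>x. (cmod (u1 x))^2 \<partial>lborel)"
  have iu2n: "integrable lborel (\<lambda>x. cmod (u2 x))" using int_u2 by simp
  have ftc: "cmod (u1 s) \<le> cmod (u1 t) + K2" if "s \<le> t" for s t
  proof -
    have "(u2 has_integral (u1 t - u1 s)) {s..t}"
      by (rule fundamental_theorem_of_calculus[OF that]) (auto intro: has_vector_derivative_at_within D2)
    then have "u1 t - u1 s = integral {s..t} u2" by (simp add: integral_unique)
    then have "cmod (u1 t - u1 s) \<le> integral {s..t} (\<lambda>x. cmod (u2 x))"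
      using integral_norm_bound_integral[of u2 "{s..t}" "\<lambda>x. cmod (u2 x)"]
      by (auto intro!: integrable_continuous_real continuous_intros continuous_on_subset[OF cu2])
    also have "\<dots> \<le> K2" unfolding K2_def by (rule int_le_global[OF iu2n]) simp
    finally show ?thesis using norm_triangle_ineq2[of "u1 s" "u1 t"] by (simp add: norm_minus_commute)
  qed
  have "cmod (u1 t) \<le> 1 + 2 * S + 2 * K2^2" for t
  proof -
    define c where "c = ((cmod (u1 t))^2 - 2 * K2^2) / 2"
    have "c \<le> (cmod (u1 s))^2" if "s \<in> {t..t+1}" for s
    proof -
      have "cmod (u1 t) \<le> cmod (u1 s) + K2" using ftc[of t s] that by simp
      then have "(cmod (u1 t))^2 \<le> (cmod (u1 s) + K2)^2" by (intro power_mono) auto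
      also have "\<dots> \<le> 2 * (cmod (u1 s))^2 + 2 * K2^2"
      proof -
        have "0 \<le> (cmod (u1 s) - K2)^2" by simp
        then show ?thesis by (simp add: power2_eq_square algebra_simps)
      qed
      finally show ?thesis unfolding c_def by simp
    qed
    then have "integral {t..t+1} (\<lambda>s. c) \<le> integral {t..t+1} (\<lambda>s. (cmod (u1 s))^2)"
      by (intro integral_le) (auto intro!: integrable_continuous_real continuous_intros continuous_on_subset[OF cu1])
    also have "\<dots> \<le> S" unfolding S_def by (rule int_le_global[OF S1]) simp
    finally have "c \<le> S" by simp
    then have "(cmod (u1 t))^2 \<le> 2 * S + 2 * K2^2" unfolding c_def by simp
    moreover have "cmod (u1 t) \<le> 1 + (cmod (u1 t))^2"
    proof -
      have "0 \<le> (cmod (u1 t) - 1)^2" by simp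
      then have "2 * cmod (u1 t) \<le> 1 + (cmod (u1 t))^2" by (simp add: power2_eq_square algebra_simps)
      then show ?thesis using norm_ge_zero[of "u1 t"] by linarith
    qed
    ultimately show ?thesis by linarith
  qed
  then show ?thesis by blast
qed

lemma u2_bounded: "\<exists>B2. \<forall>t. cmod (u2 t) \<le> B2"
proof -
  define A where "A = (\<integral>x. cmod (u x) \<partial>lborel)"
  define S3 where "S3 = (\<integral>x. (cmod (u3 x))^2 \<partial>lborel)"
  have "cmod (u2 t) \<le> 8 * A + 3 + S3" for t
  proof -
    have "cmod (u2 t) \<le> 8 * integral {t..t+3*1} (\<lambda>x. cmod (u x)) / 1^3 + 2 * integral {t..t+3*1} (\<lambda>x. cmod (u3 x))"
      by (rule loc_est) auto
    moreover have "integral {t..t+3} (\<lambda>x. cmod (u x)) \<le> A"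
      unfolding A_def by (rule int_le_global) (use iu in auto)
    moreover have "integral {t..t+3} (\<lambda>x. cmod (u3 x)) \<le> 3/2 + S3/2"
    proof -
      have "integral {t..t+3} (\<lambda>x. cmod (u3 x)) \<le> integral {t..t+3} (\<lambda>x. 1/2 + (cmod (u3 x))^2 / 2)"
      proof (rule integral_le[OF iu3])
        show "(\<lambda>x. 1/2 + (cmod (u3 x))^2 / 2) integrable_on {t..t+3}"
          using integrable_add[OF integrable_const_ivl[of "1/2" t "t+3"] integrable_cmul[OF iu3sq, of "1/2"]] by simp
        show "cmod (u3 x) \<le> 1/2 + (cmod (u3 x))^2 / 2" for x
        proof -
          have "0 \<le> (cmod (u3 x) - 1)^2" by simp
          then show ?thesis by (simp add: power2_eq_square algebra_simps)
        qed
      qed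
      also have "\<dots> = 3/2 + integral {t..t+3} (\<lambda>x. (cmod (u3 x))^2) / 2"
        using iu3sq by (subst integral_add) (auto simp: integrable_on_cmult_left)
      also have "integral {t..t+3} (\<lambda>x. (cmod (u3 x))^2) \<le> S3"
        unfolding S3_def by (rule int_le_global[OF S3]) simp
      finally show ?thesis by simp
    qed
    ultimately show ?thesis by simp
  qed
  then show ?thesis by blast
qed


definition utx :: "real \<Rightarrow> complex" where
  "utx x = cnj (u2 x) + (\<i>/2) * complex_of_real ((cmod (u1 x))^2) * cnj (u1 x)"

lemma vol_utx: "\<exists>B. vol u utx B"
proof -
  obtain B1 where B1: "\<And>t. cmod (u1 t) \<le> B1" using u1_bounded by blast
  obtain B2 where B2: "\<And>t. cmod (u2 t) \<le> B2" using u2_bounded by blast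
  have B10: "0 \<le> B1" using B1[of 0] norm_ge_zero[of "u1 0"] by linarith
  have cut: "continuous_on UNIV utx" unfolding utx_def
    by (intro continuous_intros cu1 cu2)
  have nb: "cmod (utx x) \<le> cmod (u2 x) + B1 / 2 * (cmod (u1 x))^2" for x
  proof -
    have "cmod (utx x) \<le> cmod (cnj (u2 x)) + cmod ((\<i>/2) * complex_of_real ((cmod (u1 x))^2) * cnj (u1 x))"
      unfolding utx_def by (rule norm_triangle_ineq)
    also have "cmod ((\<i>/2) * complex_of_real ((cmod (u1 x))^2) * cnj (u1 x)) = (cmod (u1 x))^2 * cmod (u1 x) / 2"
      by (simp add: norm_mult norm_divide norm_power)
    also have "\<dots> \<le> (cmod (u1 x))^2 * B1 / 2"
      by (intro divide_right_mono mult_left_mono B1) auto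
    finally show ?thesis by (simp add: mult_ac)
  qed
  have iut: "integrable lborel utx"
  proof (rule Bochner_Integration.integrable_bound[where f="\<lambda>x. cmod (u2 x) + B1 / 2 * (cmod (u1 x))^2"])
    show "integrable lborel (\<lambda>x. cmod (u2 x) + B1 / 2 * (cmod (u1 x))^2)"
      using int_u2 S1 by simp
    show "utx \<in> borel_measurable lborel" using cut by (rule cont_meas)
    show "AE x in lborel. norm (utx x) \<le> norm (cmod (u2 x) + B1 / 2 * (cmod (u1 x))^2)"
      using nb B10 by (intro AE_I2) (smt (verit) norm_ge_zero real_norm_def zero_le_power2 mult_nonneg_nonneg divide_nonneg_nonneg)
  qed
  have bd: "cmod (utx x) \<le> B2 + B1 / 2 * B1^2" for x
  proof -
    have "(cmod (u1 x))^2 \<le> B1^2" by (intro power_mono B1) auto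
    then have "B1 / 2 * (cmod (u1 x))^2 \<le> B1 / 2 * B1^2" using B10 by (intro mult_left_mono) auto
    then show ?thesis using nb[of x] B2[of x] by linarith
  qed
  show ?thesis
    by (intro exI[of _ "B2 + B1 / 2 * B1^2"]) (unfold_locales, use cu cut iu iut bd in auto)
qed

end

lemma powr_sq': "((1 + x^2) powr (3/2))^2 = (1 + (x::real)^2)^3"
proof -
  have p: "0 < 1 + x^2" by (simp add: add_pos_nonneg)
  have "((1 + x^2) powr (3/2))^2 = (1 + x^2) powr (3/2) * (1 + x^2) powr (3/2)" by (simp add: power2_eq_square)
  also have "\<dots> = (1 + x^2) powr (real 3)" by (simp add: powr_add[symmetric])
  also have "\<dots> = (1 + x^2)^3" using p by (rule powr_realpow)
  finally show ?thesis .
qed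

lemma H33_vol:
  assumes "H33 u"
  shows "\<exists>B. vol u (utilde u) B"
proof -
  from assms obtain u3 where D1: "\<And>x. (u has_vector_derivative d1 u x) (at x)"
    and D2: "\<And>x. (d1 u has_vector_derivative d2 u x) (at x)"
    and s3: "sq_int u3"
    and A3: "\<And>a b. a \<le> b \<Longrightarrow> set_integrable lborel {a..b} u3 \<and> d2 u b - d2 u a = set_lebesgue_integral lborel {a..b} u3"
    and s1: "sq_int (d1 u)"
    and sw: "sq_int (\<lambda>x. complex_of_real ((1 + x^2) powr (3/2)) * u x)"
    unfolding H33_def by blast
  have SW: "integrable lborel (\<lambda>x. (1 + x^2)^3 * (cmod (u x))^2)"
  proof -
    have "(cmod (complex_of_real ((1 + x^2) powr (3/2)) * u x))^2 = (1 + x^2)^3 * (cmod (u x))^2" for x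
      by (simp add: norm_mult power_mult_distrib powr_sq')
    then show ?thesis using sw unfolding sq_int_def by simp
  qed
  interpret hyp u "d1 u" "d2 u" u3
    by unfold_locales (use D1 D2 A3 s3 s1 SW in \<open>auto simp: sq_int_def\<close>)
  have "utilde u = utx" by (intro ext) (simp add: utilde_def utx_def)
  then show ?thesis using vol_utx by simp
qed

theorem lemma7:
  fixes u :: "real \<Rightarrow> complex"
  assumes "H33 u"
  shows "\<exists>Lk :: real \<Rightarrow> real \<Rightarrow> complex \<Rightarrow> complex.
    (\<forall>k\<in>Kdom.
       (\<forall>f. C0p f \<longrightarrow> C0p (Top u k f)) \<and>
       (\<exists>R :: (real \<Rightarrow> complex) \<Rightarrow> real \<Rightarrow> complex.
          (\<forall>f. C0p f \<longrightarrow> C0p (R f)) \<and>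
          (\<forall>f g c. C0p f \<longrightarrow> C0p g \<longrightarrow>
              (\<forall>x\<ge>0. R (\<lambda>y. f y + c * g y) x = R f x + c * R g x)) \<and>
          (\<exists>C. \<forall>f. C0p f \<longrightarrow> supn (R f) \<le> C * supn f) \<and>
          (\<forall>f. C0p f \<longrightarrow> (\<forall>x\<ge>0. R f x - Top u k (R f) x = f x)) \<and>
          (\<forall>f. C0p f \<longrightarrow> (\<forall>x\<ge>0. R (\<lambda>y. f y - Top u k f y) x = f x)) \<and>
          (\<forall>f. C0p f \<longrightarrow> (\<forall>x\<ge>0.
              set_integrable lborel {0..} (\<lambda>y. Lk x y k * f y) \<and>
              R f x - f x = set_lebesgue_integral lborel {0..} (\<lambda>y. Lk x y k * f y)))) \<and>
       (\<forall>x y. 0 \<le> y \<longrightarrow> y < x \<longrightarrow> Lk x y k = 0) \<and>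
       (\<forall>x\<ge>0. \<forall>y\<ge>0. cmod (Lk x y k) \<le>
          exp (W11norm u * L1norm (utilde u)) * W11norm u * cmod (utilde u y))) \<and>
    continuous_on {(x, y, k). 0 \<le> x \<and> x < y \<and> k \<in> Kdom} (\<lambda>(x, y, k). Lk x y k)"
  using main_from_vol H33_vol[OF assms] by blast

end
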